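(* Let $0<\epsilon\le 1$ and $m=\log_2(1/\epsilon)$. Let $O$ be an oracle (a unitary), and let $\mathcal{A}_1^O,\dots,\mathcal{A}_N^O$ be $l$-qubit oracular quantum algorithms, each making exactly $k$ calls to $O$. Let $\gamma^1,\dots,\gamma^N\in\{0,1\}^l$ be basis states, and suppose the reflections $S_{\gamma^y}=\mathcal{I}-2|\gamma^y\rangle\langle\gamma^y|$ are available. Then there is a quantum algorithm (called \textsc{MDistAEAlgo}) that makes $O(k/\epsilon)$ queries to $O$ and, given any initial state $\sum_y \alpha_y |y\rangle|0^l\rangle|0^m\rangle$, with probability at least $8/\pi^2$ outputs a state of the form $\sum_y \alpha_y |y\rangle|\xi_y\rangle|\tilde{\beta}_{y\gamma^y}\rangle$, where for each $y$ the value $\sin^2\!\big(\tilde{\beta}_{y\gamma^y}\pi/2^m\big)$ is an $O(\epsilon)$-additive estimate of $|\langle\gamma^y|\mathcal{A}_y^O|0^l\rangle|^2$.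
   Context: The register $|y\rangle$ ranges over $y\in\{1,\dots,N\}$ (encoded in $\log N$ qubits), $|\xi_y\rangle$ are some $l$-qubit states, and $\tilde\beta_{y\gamma^y}\in\{0,\dots,2^m-1\}$ is an $m$-bit integer stored in the last register. Query complexity is the total number of calls to $O$ (the algorithms may also be applied in controlled and inverted form). This is the "multidistribution amplitude estimation" task: estimating, in superposition over $y$, the probability of the basis state $|\gamma^y\rangle$ in the output state $\mathcal{A}^O_y|0^l\rangle$. *)

theory Defs
  imports "HOL-Analysis.Analysis" "Jordan_Normal_Form.Schur_Decomposition"
begin

text \<open>Hilbert space of the three registers |y>|x>|b>, y < N, x < 2^l, b < 2^m.
  Basis index of |y>|x>|b> is (y * 2^l + x) * 2^m + b.\<close>

definition dimH :: "nat \<Rightarrow> nat \<Rightarrow> nat \<Rightarrow> nat" where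
  "dimH N l m = N * 2^l * 2^m"

definition yreg :: "nat \<Rightarrow> nat \<Rightarrow> nat \<Rightarrow> nat" where
  "yreg l m i = i div 2^m div 2^l"

definition xreg :: "nat \<Rightarrow> nat \<Rightarrow> nat \<Rightarrow> nat" where
  "xreg l m i = (i div 2^m) mod 2^l"

definition breg :: "nat \<Rightarrow> nat \<Rightarrow> nat" where
  "breg m i = i mod 2^m"

definition unitary_mat :: "nat \<Rightarrow> complex mat \<Rightarrow> bool" where
  "unitary_mat n U \<longleftrightarrow> U \<in> carrier_mat n n \<and> U * mat_adjoint U = 1\<^sub>m n
      \<and> mat_adjoint U * U = 1\<^sub>m n"

fun oracle_alg :: "complex mat \<Rightarrow> (nat \<Rightarrow> complex mat) \<Rightarrow> nat \<Rightarrow> complex mat" where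
  "oracle_alg Orc U 0 = U 0"
| "oracle_alg Orc U (Suc i) = U (Suc i) * (Orc * oracle_alg Orc U i)"

definition refl_mat :: "nat \<Rightarrow> nat \<Rightarrow> complex mat" where
  "refl_mat l g = mat (2^l) (2^l) (\<lambda>(i,j). if i = j then (if i = g then -1 else 1) else 0)"

text \<open>Control condition: None = uncontrolled, Some j = controlled on qubit j of the
  last (m-qubit) register.\<close>
definition ctrl_ok :: "nat option \<Rightarrow> nat \<Rightarrow> bool" where
  "ctrl_ok c b = (case c of None \<Rightarrow> True | Some j \<Rightarrow> b div 2^j mod 2 = 1)"

text \<open>(Controlled) application of sum_y |y><y| (x) G_y on the first two registers.\<close>
definition ctrl_block :: "nat \<Rightarrow> nat \<Rightarrow> nat \<Rightarrow> nat option \<Rightarrow> (nat \<Rightarrow> complex mat) \<Rightarrow> complex mat" where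
  "ctrl_block N l m c G = mat (dimH N l m) (dimH N l m) (\<lambda>(i,j).
     if yreg l m i = yreg l m j \<and> breg m i = breg m j then
       (if ctrl_ok c (breg m i) then G (yreg l m i) $$ (xreg l m i, xreg l m j)
        else (if xreg l m i = xreg l m j then 1 else 0))
     else 0)"

text \<open>Gates of the algorithm: fixed (input independent) unitaries, the (possibly
  controlled, possibly inverted) multiplexed algorithm sum_y |y><y| (x) A_y^O, each use
  costing k queries to O, and the (possibly controlled) reflections
  sum_y |y><y| (x) S_(gamma^y).\<close>
datatype gate = Fixed "complex mat" | AGate bool "nat option" | SGate "nat option"

fun gate_mat :: "nat \<Rightarrow> nat \<Rightarrow> nat \<Rightarrow> (nat \<Rightarrow> complex mat) \<Rightarrow> (nat \<Rightarrow> nat) \<Rightarrow> gate \<Rightarrow> complex mat" where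
  "gate_mat N l m A \<gamma> (Fixed U) = U"
| "gate_mat N l m A \<gamma> (AGate adj c) =
     ctrl_block N l m c (\<lambda>y. if adj then mat_adjoint (A y) else A y)"
| "gate_mat N l m A \<gamma> (SGate c) = ctrl_block N l m c (\<lambda>y. refl_mat l (\<gamma> y))"

definition valid_circuit :: "nat \<Rightarrow> nat \<Rightarrow> nat \<Rightarrow> gate list \<Rightarrow> bool" where
  "valid_circuit N l m gs \<longleftrightarrow> (\<forall>U. Fixed U \<in> set gs \<longrightarrow> unitary_mat (dimH N l m) U)"

fun is_AGate :: "gate \<Rightarrow> bool" where
  "is_AGate (AGate _ _) = True"
| "is_AGate _ = False"

definition num_queries :: "nat \<Rightarrow> gate list \<Rightarrow> nat" where
  "num_queries k gs = k * length (filter is_AGate gs)"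

definition run_circuit :: "nat \<Rightarrow> nat \<Rightarrow> nat \<Rightarrow> (nat \<Rightarrow> complex mat) \<Rightarrow> (nat \<Rightarrow> nat)
    \<Rightarrow> gate list \<Rightarrow> complex vec \<Rightarrow> complex vec" where
  "run_circuit N l m A \<gamma> gs v = foldl (\<lambda>w g. gate_mat N l m A \<gamma> g *\<^sub>v w) v gs"

definition init_state :: "nat \<Rightarrow> nat \<Rightarrow> nat \<Rightarrow> (nat \<Rightarrow> complex) \<Rightarrow> complex vec" where
  "init_state N l m \<alpha> = vec (dimH N l m)
     (\<lambda>i. if xreg l m i = 0 \<and> breg m i = 0 then \<alpha> (yreg l m i) else 0)"

text \<open>State sum_y alpha_y |y> (x) Phi_y, with Phi_y a vector on the last two registers
  (index x * 2^m + b).\<close>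
definition out_state :: "nat \<Rightarrow> nat \<Rightarrow> nat \<Rightarrow> (nat \<Rightarrow> complex) \<Rightarrow> (nat \<Rightarrow> complex vec) \<Rightarrow> complex vec" where
  "out_state N l m \<alpha> \<Phi> = vec (dimH N l m)
     (\<lambda>i. \<alpha> (yreg l m i) * \<Phi> (yreg l m i) $ (i mod (2^l * 2^m)))"

definition prob_last :: "nat \<Rightarrow> nat \<Rightarrow> complex vec \<Rightarrow> (nat \<Rightarrow> bool) \<Rightarrow> real" where
  "prob_last l m \<Phi> P = (\<Sum>i<2^l * 2^m. if P (i mod 2^m) then (cmod (\<Phi> $ i))\<^sup>2 else 0)"

end

theory Submission
  imports Defs
begin


lemma sum_add_split: "(\<Sum>i<n+b. f i) = (\<Sum>i<n. f i) + (\<Sum>r<(b::nat). f (n+r))"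
  by (induction b) (auto simp: add.assoc)

lemma sum_mult_split: "(\<Sum>i<a*b. f i) = (\<Sum>q<(a::nat). \<Sum>r<b. f (q*b + r)::'a::comm_monoid_add)"
proof (induction a)
  case 0 then show ?case by simp
next
  case (Suc a)
  have "(\<Sum>i<Suc a*b. f i) = (\<Sum>i<a*b + b. f i)" by (simp add: add.commute)
  also have "\<dots> = (\<Sum>i<a*b. f i) + (\<Sum>r<b. f (a*b+r))" by (rule sum_add_split)
  finally show ?case using Suc by simp
qed

lemma sum_triple: "(\<Sum>i<dimH N l m. f i) =
   (\<Sum>y<N. \<Sum>x<(2::nat)^l. \<Sum>b<(2::nat)^m. f ((y*2^l + x)*2^m + b))"
  unfolding dimH_def sum_mult_split by simp

lemma regs_of:
  assumes "x < 2^l" "b < 2^m"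
  shows "yreg l m ((y*2^l + x)*2^m + b) = y" "xreg l m ((y*2^l + x)*2^m + b) = x"
        "breg m ((y*2^l + x)*2^m + b) = b"
  using assms by (auto simp: yreg_def xreg_def breg_def)

lemma regs_bound:
  assumes "i < dimH N l m"
  shows "yreg l m i < N" "xreg l m i < 2^l" "breg m i < 2^m"
proof -
  have "i div 2^m < N * 2^l" using assms unfolding dimH_def
    by (simp add: less_mult_imp_div_less)
  then show "yreg l m i < N" unfolding yreg_def by (simp add: less_mult_imp_div_less)
qed (auto simp: xreg_def breg_def)

lemma regs_decomp:
  "i = (yreg l m i * 2^l + xreg l m i) * 2^m + breg m i"
  unfolding yreg_def xreg_def breg_def
  by (metis div_mult_mod_eq mult.commute)

lemma regs_eq_iff:
  assumes "i < dimH N l m" "j < dimH N l m"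
  shows "i = j \<longleftrightarrow> yreg l m i = yreg l m j \<and> xreg l m i = xreg l m j \<and> breg m i = breg m j"
  using regs_decomp[of i l m] regs_decomp[of j l m] by metis

definition svec :: "nat \<Rightarrow> nat \<Rightarrow> nat \<Rightarrow> (nat \<Rightarrow> nat \<Rightarrow> nat \<Rightarrow> complex) \<Rightarrow> complex vec" where
  "svec N l m S = vec (dimH N l m) (\<lambda>i. S (yreg l m i) (xreg l m i) (breg m i))"

lemma svec_cong:
  assumes "\<And>y x b. y < N \<Longrightarrow> x < 2^l \<Longrightarrow> b < 2^m \<Longrightarrow> S y x b = S' y x b"
  shows "svec N l m S = svec N l m S'"
  unfolding svec_def using assms regs_bound by (intro eq_vecI) auto

lemma svec_eqI:
  assumes "dim_vec v = dimH N l m"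
    and "\<And>i. i < dimH N l m \<Longrightarrow> v $ i = S (yreg l m i) (xreg l m i) (breg m i)"
  shows "v = svec N l m S"
  unfolding svec_def using assms by (intro eq_vecI) auto

lemma sum_triple_collapse_yb:
  assumes "y < N" "b < 2^m"
  shows "(\<Sum>j<dimH N l m. (if yreg l m j = y \<and> breg m j = b then g (xreg l m j) else 0)) =
         (\<Sum>x<2^l. g x)"
proof -
  have "(\<Sum>j<dimH N l m. (if yreg l m j = y \<and> breg m j = b then g (xreg l m j) else 0)) =
     (\<Sum>y'<N. \<Sum>x<(2::nat)^l. \<Sum>b'<(2::nat)^m. (if y' = y \<and> b' = b then g x else 0))"
    unfolding sum_triple by (intro sum.cong refl) (simp add: regs_of)
  also have "\<dots> = (\<Sum>y'<N. if y' = y then (\<Sum>x<(2::nat)^l. g x) else 0)"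
    using assms by (intro sum.cong refl) (auto simp: sum.If_cases)
  also have "\<dots> = (\<Sum>x<2^l. g x)" using assms by simp
  finally show ?thesis .
qed

lemma sum_triple_collapse_yx:
  assumes "y < N" "x < 2^l"
  shows "(\<Sum>j<dimH N l m. (if yreg l m j = y \<and> xreg l m j = x then g (breg m j) else 0)) =
         (\<Sum>b<2^m. g b)"
proof -
  have "(\<Sum>j<dimH N l m. (if yreg l m j = y \<and> xreg l m j = x then g (breg m j) else 0)) =
     (\<Sum>y'<N. \<Sum>x'<(2::nat)^l. \<Sum>b<(2::nat)^m. (if y' = y \<and> x' = x then g b else 0))"
    unfolding sum_triple by (intro sum.cong refl) (simp add: regs_of)
  also have "\<dots> = (\<Sum>y'<N. \<Sum>x'<(2::nat)^l. if y' = y \<and> x' = x then (\<Sum>b<(2::nat)^m. g b) else 0)"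
    by (intro sum.cong refl) auto
  also have "\<dots> = (\<Sum>y'<N. if y' = y then (\<Sum>b<(2::nat)^m. g b) else 0)"
    using assms by (intro sum.cong refl) (auto simp: sum.If_cases)
  also have "\<dots> = (\<Sum>b<2^m. g b)" using assms by simp
  finally show ?thesis .
qed



lemma adj_dims[simp]: "dim_row (mat_adjoint A) = dim_col A" "dim_col (mat_adjoint A) = dim_row A"
  unfolding mat_adjoint_def by auto

lemma adj_index[simp]: "i < dim_col A \<Longrightarrow> j < dim_row A \<Longrightarrow> mat_adjoint A $$ (i,j) = cnj (A $$ (j,i))"
  unfolding mat_adjoint_def by (simp add: mat_of_rows_def)

lemma adj_carrier: "A \<in> carrier_mat n k \<Longrightarrow> mat_adjoint A \<in> carrier_mat k n"
  by auto

lemma mult_vec_entry: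
  assumes "dim_col A = n" "dim_vec v = n" "i < dim_row A"
  shows "(A *\<^sub>v v) $ i = (\<Sum>j<n. A $$ (i,j) * v $ j)"
  using assms by (simp add: scalar_prod_def atLeast0LessThan)

lemma mult_mat_entry:
  assumes "dim_col A = n" "dim_row B = n" "i < dim_row A" "j < dim_col B"
  shows "(A * B) $$ (i,j) = (\<Sum>k<n. A $$ (i,k) * B $$ (k,j))"
  using assms by (simp add: scalar_prod_def atLeast0LessThan)

lemma adj_mult:
  fixes A B :: "complex mat"
  assumes "A \<in> carrier_mat n n" "B \<in> carrier_mat n n"
  shows "mat_adjoint (A * B) = mat_adjoint B * mat_adjoint A"
proof (rule eq_matI)
  fix i j assume ij: "i < dim_row (mat_adjoint B * mat_adjoint A)" "j < dim_col (mat_adjoint B * mat_adjoint A)"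
  then have i: "i < n" and j: "j < n" using assms by auto
  have "mat_adjoint (A * B) $$ (i,j) = cnj ((A * B) $$ (j,i))"
    using assms i j by simp
  also have "\<dots> = cnj (\<Sum>k<n. A $$ (j,k) * B $$ (k,i))"
    using assms i j by (subst mult_mat_entry[of _ n]) auto
  also have "\<dots> = (\<Sum>k<n. mat_adjoint B $$ (i,k) * mat_adjoint A $$ (k,j))"
    using assms i j by (simp add: cnj_sum mult.commute)
  also have "\<dots> = (mat_adjoint B * mat_adjoint A) $$ (i,j)"
    using assms i j by (subst mult_mat_entry[of _ n]) auto
  finally show "mat_adjoint (A * B) $$ (i,j) = (mat_adjoint B * mat_adjoint A) $$ (i,j)" .
qed (use assms in auto)

lemma unitary_mult:
  assumes "unitary_mat n A" "unitary_mat n B"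
  shows "unitary_mat n (A * B)"
proof -
  have A: "A \<in> carrier_mat n n" and B: "B \<in> carrier_mat n n" using assms unfolding unitary_mat_def by auto
  have aA: "mat_adjoint A \<in> carrier_mat n n" and aB: "mat_adjoint B \<in> carrier_mat n n" using A B by auto
  have "A * B * mat_adjoint (A * B) = A * (B * mat_adjoint B) * mat_adjoint A"
    using A B aA aB by (simp add: adj_mult assoc_mult_mat[of _ n n _ n _ n])
  also have "\<dots> = 1\<^sub>m n" using assms A unfolding unitary_mat_def by simp
  finally have 1: "A * B * mat_adjoint (A * B) = 1\<^sub>m n" .
  have "mat_adjoint (A * B) * (A * B) = mat_adjoint B * (mat_adjoint A * A) * B"
    using A B aA aB by (simp add: adj_mult assoc_mult_mat[of _ n n _ n _ n])
  also have "\<dots> = 1\<^sub>m n" using assms aB B unfolding unitary_mat_def by (simp add: right_mult_one_mat)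
  finally show ?thesis using 1 A B unfolding unitary_mat_def by auto
qed

lemma oracle_alg_unitary:
  assumes "unitary_mat n Or" "\<And>i. i \<le> k \<Longrightarrow> unitary_mat n (U i)"
  shows "unitary_mat n (oracle_alg Or U k)"
  using assms by (induction k) (auto intro: unitary_mult)

lemma unitary_dim: "unitary_mat n A \<Longrightarrow> A \<in> carrier_mat n n"
  unfolding unitary_mat_def by auto

lemma unitary_rows:
  assumes "unitary_mat n A" "i < n" "j < n"
  shows "(\<Sum>k<n. A $$ (i,k) * cnj (A $$ (j,k))) = (if i = j then 1 else 0)"
proof -
  have c: "A \<in> carrier_mat n n" using assms unitary_dim by auto
  have "(A * mat_adjoint A) $$ (i,j) = (\<Sum>k<n. A $$ (i,k) * cnj (A $$ (j,k)))"
    using c assms by (subst mult_mat_entry[of _ n]) (auto intro!: sum.cong)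
  then show ?thesis using assms unfolding unitary_mat_def by simp
qed

lemma unitary_cols:
  assumes "unitary_mat n A" "i < n" "j < n"
  shows "(\<Sum>k<n. cnj (A $$ (k,i)) * A $$ (k,j)) = (if i = j then 1 else 0)"
proof -
  have c: "A \<in> carrier_mat n n" using assms unitary_dim by auto
  have "(mat_adjoint A * A) $$ (i,j) = (\<Sum>k<n. cnj (A $$ (k,i)) * A $$ (k,j))"
    using c assms by (subst mult_mat_entry[of _ n]) (auto intro!: sum.cong)
  then show ?thesis using assms unfolding unitary_mat_def by simp
qed

lemma unitary_from_right:
  assumes "U \<in> carrier_mat n n" "U * mat_adjoint U = 1\<^sub>m n"
  shows "unitary_mat n U"
  using assms mat_mult_left_right_inverse[OF assms(1) adj_carrier[OF assms(1)] assms(2)] unfolding unitary_mat_def by auto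



definition Fmat :: "nat \<Rightarrow> nat \<Rightarrow> nat \<Rightarrow> (nat \<Rightarrow> nat \<Rightarrow> complex) \<Rightarrow> complex mat" where
  "Fmat N l m F = mat (dimH N l m) (dimH N l m) (\<lambda>(i,j).
     if yreg l m i = yreg l m j \<and> xreg l m i = xreg l m j then F (breg m i) (breg m j) else 0)"

definition Dmat :: "nat \<Rightarrow> nat \<Rightarrow> nat \<Rightarrow> (nat \<Rightarrow> nat \<Rightarrow> complex) \<Rightarrow> complex mat" where
  "Dmat N l m d = mat (dimH N l m) (dimH N l m) (\<lambda>(i,j).
     if i = j then d (xreg l m i) (breg m i) else 0)"

lemma svec_dim[simp]: "dim_vec (svec N l m S) = dimH N l m"
  unfolding svec_def by simp

lemma svec_index[simp]: "i < dimH N l m \<Longrightarrow> svec N l m S $ i = S (yreg l m i) (xreg l m i) (breg m i)"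
  unfolding svec_def by simp

lemma blk_apply:
  assumes "Mx = mat (dimH N l m) (dimH N l m) (\<lambda>(i,j).
     if yreg l m i = yreg l m j \<and> breg m i = breg m j then h (yreg l m i) (breg m i) (xreg l m i) (xreg l m j) else 0)"
  shows "Mx *\<^sub>v svec N l m S = svec N l m (\<lambda>y x b. \<Sum>x'<2^l. h y b x x' * S y x' b)"
proof (rule svec_eqI)
  show "dim_vec (Mx *\<^sub>v svec N l m S) = dimH N l m" using assms by simp
  fix i assume i: "i < dimH N l m"
  define y where "y = yreg l m i"
  define b where "b = breg m i"
  define x where "x = xreg l m i"
  have yb: "y < N" "b < 2^m" using regs_bound[OF i] y_def b_def by auto
  have "(Mx *\<^sub>v svec N l m S) $ i = (\<Sum>j<dimH N l m. Mx $$ (i,j) * svec N l m S $ j)"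
    using assms i by (intro mult_vec_entry) auto
  also have "\<dots> = (\<Sum>j<dimH N l m. (if yreg l m j = y \<and> breg m j = b then
        (\<lambda>x'. h y b x x' * S y x' b) (xreg l m j) else 0))"
    using assms i by (intro sum.cong refl) (auto simp: y_def b_def x_def)
  also have "\<dots> = (\<Sum>x'<2^l. h y b x x' * S y x' b)"
    by (rule sum_triple_collapse_yb[OF yb])
  finally show "(Mx *\<^sub>v svec N l m S) $ i = (\<Sum>x'<2^l. h (yreg l m i) (breg m i) (xreg l m i) x' * S (yreg l m i) x' (breg m i))"
    by (simp add: y_def b_def x_def)
qed

lemma delta_sum: "(x::nat) < n \<Longrightarrow> (\<Sum>x'<n. (if x = x' then 1 else 0) * f x') = (f x :: complex)"
proof -
  assume "x < n"
  have "(\<Sum>x'<n. (if x = x' then 1 else 0) * f x') = (\<Sum>x'<n. if x = x' then f x' else 0)"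
    by (intro sum.cong) auto
  then show ?thesis using \<open>x < n\<close> by simp
qed

lemma ctrl_apply:
  "ctrl_block N l m c G *\<^sub>v svec N l m S = svec N l m (\<lambda>y x b.
     if ctrl_ok c b then (\<Sum>x'<2^l. G y $$ (x,x') * S y x' b) else S y x b)"
proof -
  have "ctrl_block N l m c G *\<^sub>v svec N l m S = svec N l m (\<lambda>y x b. \<Sum>x'<2^l.
      (if ctrl_ok c b then G y $$ (x,x') else (if x = x' then 1 else 0)) * S y x' b)"
    by (rule blk_apply) (auto simp: ctrl_block_def intro!: cong_mat)
  also have "\<dots> = svec N l m (\<lambda>y x b.
     if ctrl_ok c b then (\<Sum>x'<2^l. G y $$ (x,x') * S y x' b) else S y x b)"
  proof (rule svec_cong)
    fix y x b :: nat assume "y < N" "x < 2^l" "b < 2^m"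
    show "(\<Sum>x'<2^l. (if ctrl_ok c b then G y $$ (x,x') else (if x = x' then 1 else 0)) * S y x' b) =
      (if ctrl_ok c b then (\<Sum>x'<2^l. G y $$ (x,x') * S y x' b) else S y x b)"
      using \<open>x < 2^l\<close> by (cases "ctrl_ok c b") (simp_all add: delta_sum)
  qed
  finally show ?thesis .
qed

lemma Fmat_apply:
  "Fmat N l m F *\<^sub>v svec N l m S = svec N l m (\<lambda>y x b. \<Sum>b'<2^m. F b b' * S y x b')"
proof (rule svec_eqI)
  show "dim_vec (Fmat N l m F *\<^sub>v svec N l m S) = dimH N l m" by (simp add: Fmat_def)
  fix i assume i: "i < dimH N l m"
  define y where "y = yreg l m i"
  define b where "b = breg m i"
  define x where "x = xreg l m i"
  have yx: "y < N" "x < 2^l" using regs_bound[OF i] y_def x_def by auto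
  have "(Fmat N l m F *\<^sub>v svec N l m S) $ i = (\<Sum>j<dimH N l m. Fmat N l m F $$ (i,j) * svec N l m S $ j)"
    using i by (intro mult_vec_entry) (auto simp: Fmat_def)
  also have "\<dots> = (\<Sum>j<dimH N l m. (if yreg l m j = y \<and> xreg l m j = x then
        (\<lambda>b'. F b b' * S y x b') (breg m j) else 0))"
    using i by (intro sum.cong refl) (auto simp: y_def b_def x_def Fmat_def)
  also have "\<dots> = (\<Sum>b'<2^m. F b b' * S y x b')"
    by (rule sum_triple_collapse_yx[OF yx])
  finally show "(Fmat N l m F *\<^sub>v svec N l m S) $ i = (\<Sum>b'<2^m. F (breg m i) b' * S (yreg l m i) (xreg l m i) b')"
    by (simp add: y_def b_def x_def)
qed

lemma Dmat_apply:
  "Dmat N l m d *\<^sub>v svec N l m S = svec N l m (\<lambda>y x b. d x b * S y x b)"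
proof (rule svec_eqI)
  show "dim_vec (Dmat N l m d *\<^sub>v svec N l m S) = dimH N l m" by (simp add: Dmat_def)
  fix i assume i: "i < dimH N l m"
  have "(Dmat N l m d *\<^sub>v svec N l m S) $ i = (\<Sum>j<dimH N l m. Dmat N l m d $$ (i,j) * svec N l m S $ j)"
    using i by (intro mult_vec_entry) (auto simp: Dmat_def)
  also have "\<dots> = (\<Sum>j<dimH N l m. if i = j then d (xreg l m i) (breg m i) * svec N l m S $ i else 0)"
    using i by (intro sum.cong refl) (auto simp: Dmat_def)
  also have "\<dots> = d (xreg l m i) (breg m i) * S (yreg l m i) (xreg l m i) (breg m i)"
    using i by simp
  finally show "(Dmat N l m d *\<^sub>v svec N l m S) $ i = d (xreg l m i) (breg m i) * S (yreg l m i) (xreg l m i) (breg m i)" .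
qed

lemma Fmat_unitary:
  assumes orth: "\<And>b b'. b < 2^m \<Longrightarrow> b' < 2^m \<Longrightarrow>
     (\<Sum>c<2^m. F b c * cnj (F b' c)) = (if b = b' then 1 else 0)"
  shows "unitary_mat (dimH N l m) (Fmat N l m F)"
proof (rule unitary_from_right)
  let ?D = "dimH N l m"
  show c: "Fmat N l m F \<in> carrier_mat ?D ?D" by (simp add: Fmat_def)
  show "Fmat N l m F * mat_adjoint (Fmat N l m F) = 1\<^sub>m ?D"
  proof (rule eq_matI)
    fix i i' assume "i < dim_row (1\<^sub>m ?D)" "i' < dim_col (1\<^sub>m ?D)"
    then have i: "i < ?D" and i': "i' < ?D" by auto
    define y where "y = yreg l m i"
    define b where "b = breg m i"
    define x where "x = xreg l m i"
    have yx: "y < N" "x < 2^l" "b < 2^m" using regs_bound[OF i] y_def x_def b_def by auto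
    have b': "breg m i' < 2^m" using regs_bound[OF i'] by auto
    have "(Fmat N l m F * mat_adjoint (Fmat N l m F)) $$ (i,i') =
       (\<Sum>j<?D. Fmat N l m F $$ (i,j) * mat_adjoint (Fmat N l m F) $$ (j,i'))"
      using i i' c by (subst mult_mat_entry[of _ ?D]) auto
    also have "\<dots> = (\<Sum>j<?D. if yreg l m j = y \<and> xreg l m j = x then
         (if yreg l m i' = y \<and> xreg l m i' = x then F b (breg m j) * cnj (F (breg m i') (breg m j)) else 0) else 0)"
      using i i' by (intro sum.cong refl) (auto simp: Fmat_def y_def x_def b_def)
    also have "\<dots> = (if yreg l m i' = y \<and> xreg l m i' = x then
         (\<Sum>j<?D. if yreg l m j = y \<and> xreg l m j = x then
           (\<lambda>c. F b c * cnj (F (breg m i') c)) (breg m j) else 0) else 0)"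
    proof (cases "yreg l m i' = y \<and> xreg l m i' = x")
      case True then show ?thesis by (auto intro!: sum.cong)
    next
      case False then show ?thesis by (auto intro!: sum.neutral)
    qed
    also have "\<dots> = (if yreg l m i' = y \<and> xreg l m i' = x then
           (\<Sum>c<2^m. F b c * cnj (F (breg m i') c)) else 0)"
      using sum_triple_collapse_yx[OF yx(1,2), where g="\<lambda>c. F b c * cnj (F (breg m i') c)"] by simp
    also have "\<dots> = 1\<^sub>m ?D $$ (i,i')"
      using orth[OF yx(3) b'] regs_eq_iff[OF i i'] i i' by (auto simp: y_def x_def b_def)
    finally show "(Fmat N l m F * mat_adjoint (Fmat N l m F)) $$ (i,i') = 1\<^sub>m ?D $$ (i,i')" .
  qed (auto simp: Fmat_def)
qed

lemma Dmat_unitary: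
  assumes "\<And>x b. d x b * cnj (d x b) = 1"
  shows "unitary_mat (dimH N l m) (Dmat N l m d)"
proof (rule unitary_from_right)
  let ?D = "dimH N l m"
  show c: "Dmat N l m d \<in> carrier_mat ?D ?D" by (simp add: Dmat_def)
  show "Dmat N l m d * mat_adjoint (Dmat N l m d) = 1\<^sub>m ?D"
  proof (rule eq_matI)
    fix i i' assume "i < dim_row (1\<^sub>m ?D)" "i' < dim_col (1\<^sub>m ?D)"
    then have i: "i < ?D" and i': "i' < ?D" by auto
    have "(Dmat N l m d * mat_adjoint (Dmat N l m d)) $$ (i,i') =
       (\<Sum>j<?D. Dmat N l m d $$ (i,j) * mat_adjoint (Dmat N l m d) $$ (j,i'))"
      using i i' c by (subst mult_mat_entry[of _ ?D]) auto
    also have "\<dots> = (\<Sum>j<?D. if i = j then (if i' = i then d (xreg l m i) (breg m i) * cnj (d (xreg l m i) (breg m i)) else 0) else 0)"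
      using i i' by (intro sum.cong refl) (auto simp: Dmat_def)
    also have "\<dots> = 1\<^sub>m ?D $$ (i,i')"
      using i i' assms by simp
    finally show "(Dmat N l m d * mat_adjoint (Dmat N l m d)) $$ (i,i') = 1\<^sub>m ?D $$ (i,i')" .
  qed (auto simp: Dmat_def)
qed



definition Esum :: "nat \<Rightarrow> real \<Rightarrow> real" where
  "Esum M d = (cmod (\<Sum>t<M. cis (2*pi*real t*d)))\<^sup>2 / (real M)\<^sup>2"

lemma cis_eq_1_int: "cis a = 1 \<Longrightarrow> \<exists>n::int. a = of_int n * 2 * pi"
proof -
  assume "cis a = 1"
  then have "Re (cis a) = 1" by simp
  then have "cos a = 1" by simp
  then show ?thesis using cos_one_2pi_int by auto
qed

lemma orth_sum:
  assumes "0 < M"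
  shows "(\<Sum>b<M. cis (2*pi*real b* of_int k/real M)) = (if int M dvd k then of_nat M else 0)"
proof -
  define z where "z = cis (2*pi* of_int k/real M)"
  have zb: "cis (2*pi*real b* of_int k/real M) = z^b" for b
  proof -
    have "z^b = cis (real b * (2*pi* of_int k/real M))" unfolding z_def by (rule Complex.DeMoivre)
    then show ?thesis by (simp add: algebra_simps)
  qed
  have sum: "(\<Sum>b<M. cis (2*pi*real b* of_int k/real M)) = (\<Sum>b<M. z^b)"
    using zb by simp
  show ?thesis
  proof (cases "int M dvd k")
    case True
    then obtain q where q: "k = int M * q" by blast
    have arg: "2*pi* of_int k/real M = 2*pi* of_int q" unfolding q using assms by simp
    have "z = 1" unfolding z_def arg by (rule cis_multiple_2pi) simp
    then show ?thesis using sum True by simp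
  next
    case False
    have z1: "z \<noteq> 1"
    proof
      assume "z = 1"
      then obtain n :: int where n: "2*pi* of_int k/real M = of_int n * 2 * pi"
        unfolding z_def using cis_eq_1_int by blast
      then have "of_int k = of_int n * real M" using assms by (simp add: field_simps)
      then have "k = n * int M" by (metis of_int_eq_iff of_int_mult of_int_of_nat_eq)
      then show False using False by simp
    qed
    have "z^M = cis (2*pi* of_int k)" unfolding z_def Complex.DeMoivre using assms by simp
    also have "\<dots> = 1" by (rule cis_multiple_2pi) simp
    finally have "z^M = 1" .
    then show ?thesis using sum False z1 by (simp add: sum_gp_strict)
  qed
qed

lemma Esum_periodic: "Esum M (d + of_int n) = Esum M d"
proof -
  have "cis (2*pi*real t*(d + of_int n)) = cis (2*pi*real t*d)" for t
  proof -
    have "cis (2*pi*real t*(d + of_int n)) = cis (2*pi*real t*d) * cis (2*pi*(real t * of_int n))"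
      by (simp add: cis_mult algebra_simps)
    also have "cis (2*pi*(real t * of_int n)) = 1"
      by (rule cis_multiple_2pi) simp
    finally show ?thesis by simp
  qed
  then show ?thesis unfolding Esum_def by simp
qed

lemma Esum_nonneg: "0 \<le> Esum M d"
  unfolding Esum_def by simp

lemma cmod_one_minus_cis: "(cmod (1 - cis a))\<^sup>2 = 4 * (sin (a/2))\<^sup>2"
proof -
  have "(cmod (1 - cis a))\<^sup>2 = (1 - cos a)\<^sup>2 + (sin a)\<^sup>2"
    by (simp add: cmod_power2)
  also have "\<dots> = 2 - 2 * cos a" using sin_cos_squared_add[of a]
    by (simp add: power2_eq_square algebra_simps)
  also have "cos a = 1 - 2 * sin (a/2) ^ 2" using cos_double_sin[of "a/2"] by simp
  finally show ?thesis by simp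
qed

lemma Esum_bound:
  assumes M: "0 < M" and s: "sin (pi*d) \<noteq> 0"
  shows "Esum M d \<le> 1 / ((real M)\<^sup>2 * (sin (pi*d))\<^sup>2)"
proof -
  define z where "z = cis (2*pi*d)"
  have zt: "cis (2*pi*real t*d) = z^t" for t
  proof -
    have "z^t = cis (real t * (2*pi*d))" unfolding z_def by (rule Complex.DeMoivre)
    then show ?thesis by (simp add: algebra_simps)
  qed
  have z1: "z \<noteq> 1"
  proof
    assume "z = 1"
    then obtain n :: int where n: "2*pi*d = of_int n * 2 * pi"
      unfolding z_def using cis_eq_1_int by blast
    then have "d = of_int n" by simp
    then show False using s by (simp add: sin_int_times_real mult.commute)
  qed
  have S: "(\<Sum>t<M. cis (2*pi*real t*d)) = (1 - z^M) / (1 - z)"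
    using zt z1 by (simp add: sum_gp_strict)
  have n1: "cmod (1 - z^M) \<le> 2"
    using norm_triangle_ineq4[of 1 "z^M"] by (simp add: z_def norm_power)
  have n2: "cmod (1 - z) = 2 * \<bar>sin (pi*d)\<bar>"
  proof -
    have "(cmod (1 - z))\<^sup>2 = (2 * \<bar>sin (pi*d)\<bar>)\<^sup>2"
      unfolding z_def cmod_one_minus_cis by (simp add: power_mult_distrib)
    then show ?thesis by (rule power2_eq_imp_eq) auto
  qed
  have "cmod (\<Sum>t<M. cis (2*pi*real t*d)) \<le> 2 / (2 * \<bar>sin (pi*d)\<bar>)"
    unfolding S norm_divide n2 using s n1 by (intro divide_right_mono) auto
  also have "\<dots> = 1 / \<bar>sin (pi*d)\<bar>" by simp
  finally have c: "cmod (\<Sum>t<M. cis (2*pi*real t*d)) \<le> 1 / \<bar>sin (pi*d)\<bar>" .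
  have "(cmod (\<Sum>t<M. cis (2*pi*real t*d)))\<^sup>2 \<le> (1 / \<bar>sin (pi*d)\<bar>)\<^sup>2"
    using c by (intro power_mono) auto
  then have "(cmod (\<Sum>t<M. cis (2*pi*real t*d)))\<^sup>2 / (real M)\<^sup>2 \<le> (1 / \<bar>sin (pi*d)\<bar>)\<^sup>2 / (real M)\<^sup>2"
    by (intro divide_right_mono) auto
  then show ?thesis unfolding Esum_def by (simp add: power_divide power2_abs mult.commute)
qed

lemma sin_lower: fixes t :: real assumes "0 \<le> t" "t \<le> 2" shows "t / 3 \<le> sin t"
proof -
  have "\<bar>sin t - (\<Sum>m<3. sin_coeff m * t ^ m)\<bar> \<le> inverse (fact 3) * \<bar>t\<bar> ^ 3"
    by (rule Maclaurin_sin_bound)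
  moreover have "(\<Sum>m<3. sin_coeff m * t ^ m) = t"
    by (simp add: numeral_3_eq_3 sin_coeff_def)
  moreover have "(fact 3 :: real) = 6" by (simp add: numeral_3_eq_3)
  ultimately have "t - t^3/6 \<le> sin t" using assms by (simp add: abs_if field_simps split: if_splits)
  moreover have "t^3 \<le> 4 * t" using assms
  proof -
    have "t^3 = t * t\<^sup>2" by (simp add: power2_eq_square power3_eq_cube)
    also have "\<dots> \<le> t * 4" using assms by (intro mult_left_mono) (use mult_mono[of t 2 t 2] in \<open>auto simp: power2_eq_square\<close>)
    finally show ?thesis by simp
  qed
  ultimately show ?thesis by simp
qed

lemma Esum_tail_bound:
  assumes M: "0 < M" and y: "0 < \<bar>y\<bar>" "\<bar>y\<bar> \<le> real M / 2"
  shows "Esum M (y / real M) \<le> 1 / y\<^sup>2"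
proof -
  define t where "t = pi * \<bar>y\<bar> / real M"
  have "pi * \<bar>y\<bar> \<le> 4 * \<bar>y\<bar>" using pi_less_4 by (intro mult_right_mono) auto
  then have "pi * \<bar>y\<bar> \<le> real M * 2" using y(2) by linarith
  then have t0: "0 \<le> t" and t2: "t \<le> 2" unfolding t_def using y M
    by (auto simp: field_simps)
  have "t / 3 \<le> sin t" by (rule sin_lower[OF t0 t2])
  moreover have "3 * \<bar>y\<bar> \<le> pi * \<bar>y\<bar>" using pi_gt3 by (intro mult_right_mono) auto
  then have "\<bar>y\<bar> / real M \<le> t / 3" unfolding t_def using M
    by (auto simp: field_simps)
  ultimately have low: "\<bar>y\<bar> / real M \<le> sin t" by linarith
  have pos: "0 < \<bar>y\<bar> / real M" using y M by simp
  have st: "(sin (pi * (y / real M)))\<^sup>2 = (sin t)\<^sup>2"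
    unfolding t_def by (cases "y \<ge> 0") (auto simp: abs_if)
  have sne: "sin (pi * (y / real M)) \<noteq> 0" using st low pos by auto
  have "Esum M (y / real M) \<le> 1 / ((real M)\<^sup>2 * (sin t)\<^sup>2)"
    using Esum_bound[OF M sne] st by simp
  also have "\<dots> \<le> 1 / ((real M)\<^sup>2 * (\<bar>y\<bar> / real M)\<^sup>2)"
  proof -
    have p1: "0 < (real M)\<^sup>2 * (\<bar>y\<bar> / real M)\<^sup>2" using pos M by (intro mult_pos_pos zero_less_power) auto
    have "(\<bar>y\<bar> / real M)\<^sup>2 \<le> (sin t)\<^sup>2" using low pos by (intro power_mono) auto
    then have "(real M)\<^sup>2 * (\<bar>y\<bar> / real M)\<^sup>2 \<le> (real M)\<^sup>2 * (sin t)\<^sup>2"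
      by (intro mult_left_mono) auto
    then show ?thesis using p1 by (intro divide_left_mono) auto
  qed
  also have "\<dots> = 1 / y\<^sup>2" using M by (simp add: power_divide)
  finally show ?thesis .
qed



lemma dvd_small_int: "int M dvd (int a - int b) \<Longrightarrow> a < M \<Longrightarrow> b < M \<Longrightarrow> a = b"
proof (rule ccontr)
  assume d: "int M dvd (int a - int b)" and a: "a < M" and b: "b < M" and ne: "a \<noteq> b"
  then have "int a - int b \<noteq> 0" by simp
  then have "\<bar>int M\<bar> \<le> \<bar>int a - int b\<bar>" using d dvd_imp_le_int by blast
  then show False using a b by linarith
qed

lemma parseval:
  assumes M: "0 < M"
  shows "(\<Sum>b<M. Esum M (phi - real b / real M)) = 1"
proof -
  define S where "S b = (\<Sum>t<M. cis (2*pi*real t*(phi - real b / real M)))" for b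
  have e1: "complex_of_real ((cmod (S b))\<^sup>2) = (\<Sum>t<M. \<Sum>t'<M. cis (2*pi*(real t - real t')*phi) *
      cis (2*pi*real b * of_int (int t' - int t)/real M))" for b
  proof -
    have "complex_of_real ((cmod (S b))\<^sup>2) = S b * cnj (S b)" by (rule complex_norm_square)
    also have "\<dots> = (\<Sum>t<M. \<Sum>t'<M. cis (2*pi*real t*(phi - real b / real M)) *
         cnj (cis (2*pi*real t'*(phi - real b / real M))))"
      unfolding S_def cnj_sum sum_product by simp
    also have "\<dots> = (\<Sum>t<M. \<Sum>t'<M. cis (2*pi*(real t - real t')*phi) *
      cis (2*pi*real b * of_int (int t' - int t)/real M))"
    proof (intro sum.cong refl)
      fix t t' assume "t \<in> {..<M}" "t' \<in> {..<M}"
      have "cis (2*pi*real t*(phi - real b / real M)) * cnj (cis (2*pi*real t'*(phi - real b / real M)))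
        = cis (2*pi*real t*(phi - real b / real M) + - (2*pi*real t'*(phi - real b / real M)))"
        by (simp add: cis_cnj cis_mult)
      also have "2*pi*real t*(phi - real b / real M) + - (2*pi*real t'*(phi - real b / real M)) =
         2*pi*(real t - real t')*phi + 2*pi*real b * of_int (int t' - int t)/real M"
        using M by (simp add: field_simps)
      finally show "cis (2*pi*real t*(phi - real b / real M)) * cnj (cis (2*pi*real t'*(phi - real b / real M)))
        = cis (2*pi*(real t - real t')*phi) * cis (2*pi*real b * of_int (int t' - int t)/real M)"
        by (simp add: cis_mult)
    qed
    finally show ?thesis .
  qed
  have "complex_of_real (\<Sum>b<M. (cmod (S b))\<^sup>2) = (\<Sum>b<M. \<Sum>t<M. \<Sum>t'<M. cis (2*pi*(real t - real t')*phi) *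
      cis (2*pi*real b * of_int (int t' - int t)/real M))"
    unfolding of_real_sum e1 by simp
  also have "\<dots> = (\<Sum>t<M. \<Sum>b<M. \<Sum>t'<M. cis (2*pi*(real t - real t')*phi) *
      cis (2*pi*real b * of_int (int t' - int t)/real M))"
    by (rule sum.swap)
  also have "\<dots> = (\<Sum>t<M. \<Sum>t'<M. \<Sum>b<M. cis (2*pi*(real t - real t')*phi) *
      cis (2*pi*real b * of_int (int t' - int t)/real M))"
    by (rule sum.cong[OF refl], rule sum.swap)
  also have "\<dots> = (\<Sum>t<M. \<Sum>t'<M. cis (2*pi*(real t - real t')*phi) *
      (if t = t' then of_nat M else 0))"
  proof (intro sum.cong refl)
    fix t t' assume t: "t \<in> {..<M}" and t': "t' \<in> {..<M}"
    have "(\<Sum>b<M. cis (2*pi*real b * of_int (int t' - int t)/real M)) = (if t = t' then of_nat M else 0)"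
      unfolding orth_sum[OF M] using dvd_small_int[of M t' t] t t' by auto
    then show "(\<Sum>b<M. cis (2*pi*(real t - real t')*phi) * cis (2*pi*real b * of_int (int t' - int t)/real M))
        = cis (2*pi*(real t - real t')*phi) * (if t = t' then of_nat M else 0)"
      by (simp add: sum_distrib_left[symmetric])
  qed
  also have "\<dots> = (\<Sum>t<M. of_nat M)"
  proof (intro sum.cong refl)
    fix t assume t: "t \<in> {..<M}"
    have "(\<Sum>t'<M. cis (2*pi*(real t - real t')*phi) * (if t = t' then of_nat M else 0)) =
        (\<Sum>t'<M. if t = t' then of_nat M else 0)"
      by (intro sum.cong refl) auto
    then show "(\<Sum>t'<M. cis (2*pi*(real t - real t')*phi) * (if t = t' then of_nat M else 0)) = of_nat M"
      using t by simp
  qed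
  also have "\<dots> = complex_of_real ((real M)\<^sup>2)" by (simp add: power2_eq_square)
  finally have "(\<Sum>b<M. (cmod (S b))\<^sup>2) = (real M)\<^sup>2" using of_real_eq_iff by blast
  then show ?thesis unfolding Esum_def S_def[symmetric] sum_divide_distrib[symmetric] using M by simp
qed



lemma tele_bound: "(\<Sum>n<B. 1 / (real n + 19) - 1 / (real n + 20)) \<le> 1/19"
proof -
  have "(\<Sum>n<B. 1 / (real n + 19) - 1 / (real n + 20)) = (\<Sum>n<B. (\<lambda>n. 1 / (real n + 19)) n - (\<lambda>n. 1 / (real n + 19)) (Suc n))"
    by (intro sum.cong refl) (simp add: add.commute add.left_commute)
  also have "\<dots> = 1/19 - 1 / (real B + 19)" by (subst sum_lessThan_telescope') simp
  also have "\<dots> \<le> 1/19" by simp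
  finally show ?thesis .
qed

lemma tail_upper:
  assumes fin: "finite S"
  shows "(\<Sum>k\<in>S. if x + 20 < real_of_int k then 1 / (real_of_int k - x)\<^sup>2 else 0) \<le> 1/19"
proof -
  define c where "c = \<lfloor>x\<rfloor> + 21"
  define f where "f n = 1 / (real n + 19) - 1 / (real n + 20)" for n :: nat
  define T where "T = {k\<in>S. x + 20 < real_of_int k}"
  have f0: "0 \<le> f n" for n unfolding f_def by (simp add: field_simps)
  have kc: "c \<le> k" if "x + 20 < real_of_int k" for k
  proof -
    have "real_of_int \<lfloor>x\<rfloor> + 20 < real_of_int k" using that of_int_floor_le[of x] by linarith
    then have "\<lfloor>x\<rfloor> + 20 < k" by linarith
    then show ?thesis unfolding c_def by simp
  qed
  have termb: "1 / (real_of_int k - x)\<^sup>2 \<le> f (nat (k - c))" if "x + 20 < real_of_int k" for k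
  proof -
    define n where "n = nat (k - c)"
    have kn: "k - c = int n" unfolding n_def using kc[OF that] by simp
    have "real_of_int k - x \<ge> real n + 20"
      using kn real_of_int_floor_add_one_gt[of x] unfolding c_def by linarith
    then have "(real n + 20)\<^sup>2 \<le> (real_of_int k - x)\<^sup>2" by (intro power_mono) auto
    moreover have "0 < real_of_int k - x" using that by linarith
    ultimately have "1 / (real_of_int k - x)\<^sup>2 \<le> 1 / (real n + 20)\<^sup>2"
      by (intro divide_left_mono) auto
    also have "\<dots> \<le> 1 / ((real n + 19) * (real n + 20))"
      by (intro divide_left_mono) (auto simp: power2_eq_square intro!: mult_right_mono)
    also have "\<dots> = f n" unfolding f_def by (simp add: field_simps)
    finally show ?thesis unfolding n_def .
  qed
  have "(\<Sum>k\<in>S. if x + 20 < real_of_int k then 1 / (real_of_int k - x)\<^sup>2 else 0) =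
      (\<Sum>k\<in>T. 1 / (real_of_int k - x)\<^sup>2)"
    unfolding T_def using fin by (simp add: sum.inter_filter[symmetric])
  also have "\<dots> \<le> (\<Sum>k\<in>T. f (nat (k - c)))"
    by (intro sum_mono) (auto simp: T_def termb)
  also have "\<dots> = (\<Sum>n\<in>(\<lambda>k. nat (k - c)) ` T. f n)"
  proof (rule sum.reindex[symmetric, unfolded comp_def])
    show "inj_on (\<lambda>k. nat (k - c)) T"
      by (auto simp: inj_on_def T_def dest!: kc)
  qed
  also have "\<dots> \<le> (\<Sum>n<Suc (Max ((\<lambda>k. nat (k - c)) ` T)). f n)"
  proof (rule sum_mono2)
    show "finite {..<Suc (Max ((\<lambda>k. nat (k - c)) ` T))}" by simp
    show "(\<lambda>k. nat (k - c)) ` T \<subseteq> {..<Suc (Max ((\<lambda>k. nat (k - c)) ` T))}"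
      using fin unfolding T_def by (auto simp: less_Suc_eq_le)
  qed (use f0 in auto)
  also have "\<dots> \<le> 1/19" unfolding f_def by (rule tele_bound)
  finally show ?thesis .
qed

lemma tail_lower:
  assumes fin: "finite S"
  shows "(\<Sum>k\<in>S. if real_of_int k < x - 20 then 1 / (x - real_of_int k)\<^sup>2 else 0) \<le> 1/19"
proof -
  have "(\<Sum>k\<in>S. if real_of_int k < x - 20 then 1 / (x - real_of_int k)\<^sup>2 else 0) =
     (\<Sum>k\<in>uminus ` S. if - x + 20 < real_of_int k then 1 / (real_of_int k - - x)\<^sup>2 else 0)"
    by (subst sum.reindex) (auto simp: inj_on_def power2_commute intro!: sum.cong)
  also have "\<dots> \<le> 1/19" using fin by (intro tail_upper) auto
  finally show ?thesis .
qed

lemma tail_both: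
  assumes fin: "finite S"
  shows "(\<Sum>k\<in>S. if 20 < \<bar>x - real_of_int k\<bar> then 1 / (x - real_of_int k)\<^sup>2 else 0) \<le> 2/19"
proof -
  have "(\<Sum>k\<in>S. if 20 < \<bar>x - real_of_int k\<bar> then 1 / (x - real_of_int k)\<^sup>2 else 0) \<le>
     (\<Sum>k\<in>S. (if x + 20 < real_of_int k then 1 / (real_of_int k - x)\<^sup>2 else 0) +
              (if real_of_int k < x - 20 then 1 / (x - real_of_int k)\<^sup>2 else 0))"
    by (intro sum_mono) (auto simp: power2_commute)
  also have "\<dots> \<le> 1/19 + 1/19" unfolding sum.distrib using tail_upper[OF fin] tail_lower[OF fin]
    by (intro add_mono)
  finally show ?thesis by simp
qed



lemma window_bij:
  assumes M: "0 < M"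
  shows "bij_betw (\<lambda>k. nat (k mod int M)) {c..<c + int M} {..<M}"
proof -
  let ?h = "\<lambda>k. nat (k mod int M)"
  have inj: "inj_on ?h {c..<c + int M}"
  proof (rule inj_onI)
    fix a b assume a: "a \<in> {c..<c + int M}" and b: "b \<in> {c..<c + int M}" and e: "?h a = ?h b"
    have "a mod int M = b mod int M" using e M by (simp add: nat_eq_iff2)
    then have "int M dvd (a - b)" by (simp add: mod_eq_dvd_iff)
    moreover have "\<bar>a - b\<bar> < int M" using a b by auto
    ultimately show "a = b" using dvd_imp_le_int[of "a - b" "int M"] by (cases "a = b") auto
  qed
  have sub: "?h ` {c..<c + int M} \<subseteq> {..<M}"
    using M by (auto simp: nat_less_iff)
  have card: "card (?h ` {c..<c + int M}) = card {..<M}"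
    using card_image[OF inj] by simp
  have "?h ` {c..<c + int M} = {..<M}"
    using card sub by (intro card_subset_eq) auto
  then show ?thesis using inj unfolding bij_betw_def by simp
qed

lemma core:
  assumes M: "0 < M"
    and good: "\<And>k::int. \<bar>x - real_of_int k\<bar> \<le> 20 \<Longrightarrow> P (nat (k mod int M))"
  shows "17/19 \<le> (\<Sum>b<M. if P b then Esum M (x / real M - real b / real M) else 0)"
proof -
  define c where "c = \<lceil>x - real M / 2\<rceil>"
  define W where "W = {c..<c + int M}"
  define h where "h k = nat (k mod int M)" for k
  define E where "E k = Esum M ((x - real_of_int k) / real M)" for k
  have bij: "bij_betw h W {..<M}" unfolding h_def W_def by (rule window_bij[OF M])
  have reidx: "(\<Sum>b<M. g b) = (\<Sum>k\<in>W. g (h k))" for g :: "nat \<Rightarrow> real"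
    using sum.reindex_bij_betw[OF bij, of g] by simp
  have ebk: "Esum M (x / real M - real (h k) / real M) = E k" for k
  proof -
    have hk: "real (h k) = real_of_int (k mod int M)" unfolding h_def using M by simp
    have kd: "real_of_int k = real M * real_of_int (k div int M) + real_of_int (k mod int M)"
      by (metis of_int_add of_int_mult of_int_of_nat_eq div_mult_mod_eq mult.commute)
    have "x / real M - real (h k) / real M = (x - real_of_int k) / real M + real_of_int (k div int M)"
      using M unfolding hk by (simp add: kd field_simps)
    then show ?thesis unfolding E_def by (simp add: Esum_periodic)
  qed
  have win: "\<bar>x - real_of_int k\<bar> \<le> real M / 2" if "k \<in> W" for k
  proof -
    have "x - real M / 2 \<le> real_of_int c" unfolding c_def by linarith
    moreover have "real_of_int c < x - real M / 2 + 1" unfolding c_def by linarith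
    moreover have "c \<le> k" "k + 1 \<le> c + int M" using that unfolding W_def by auto
    then have "real_of_int c \<le> real_of_int k" "real_of_int k + 1 \<le> real_of_int c + real M"
      by (metis of_int_le_iff, metis of_int_1 of_int_add of_int_le_iff of_int_of_nat_eq)
    ultimately show ?thesis unfolding abs_le_iff by linarith
  qed
  have fin: "finite W" unfolding W_def by simp
  have tot: "(\<Sum>k\<in>W. E k) = 1"
    using parseval[OF M, of "x / real M"] unfolding reidx ebk .
  have tail: "(\<Sum>k\<in>W. if 20 < \<bar>x - real_of_int k\<bar> then E k else 0) \<le> 2/19"
  proof -
    have "(\<Sum>k\<in>W. if 20 < \<bar>x - real_of_int k\<bar> then E k else 0) \<le>
       (\<Sum>k\<in>W. if 20 < \<bar>x - real_of_int k\<bar> then 1 / (x - real_of_int k)\<^sup>2 else 0)"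
    proof (intro sum_mono)
      fix k assume k: "k \<in> W"
      show "(if 20 < \<bar>x - real_of_int k\<bar> then E k else 0) \<le>
         (if 20 < \<bar>x - real_of_int k\<bar> then 1 / (x - real_of_int k)\<^sup>2 else 0)"
        using Esum_tail_bound[OF M, of "x - real_of_int k"] win[OF k] unfolding E_def by auto
    qed
    also have "\<dots> \<le> 2/19" by (rule tail_both[OF fin])
    finally show ?thesis .
  qed
  have "(\<Sum>b<M. if P b then Esum M (x / real M - real b / real M) else 0) =
      (\<Sum>k\<in>W. if P (h k) then E k else 0)"
    unfolding reidx ebk ..
  also have "\<dots> \<ge> (\<Sum>k\<in>W. E k - (if 20 < \<bar>x - real_of_int k\<bar> then E k else 0))"
    using good unfolding h_def by (intro sum_mono) (auto simp: E_def Esum_nonneg)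
  moreover have "(\<Sum>k\<in>W. E k - (if 20 < \<bar>x - real_of_int k\<bar> then E k else 0)) \<ge> 17/19"
    unfolding sum_subtractf tot using tail by simp
  ultimately show ?thesis by linarith
qed



definition Sg :: "nat \<Rightarrow> (nat \<Rightarrow> complex) \<Rightarrow> nat \<Rightarrow> complex" where
  "Sg g u x = (if x = g then - u x else u x)"

definition ipf :: "nat \<Rightarrow> (nat \<Rightarrow> complex) \<Rightarrow> (nat \<Rightarrow> complex) \<Rightarrow> complex" where
  "ipf L psi u = (\<Sum>x<L. cnj (psi x) * u x)"

definition Qf :: "nat \<Rightarrow> (nat \<Rightarrow> complex) \<Rightarrow> nat \<Rightarrow> (nat \<Rightarrow> complex) \<Rightarrow> nat \<Rightarrow> complex" where
  "Qf L psi g u = (\<lambda>x. 2 * ipf L psi (Sg g u) * psi x - Sg g u x)"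

fun coefs :: "real \<Rightarrow> nat \<Rightarrow> real \<times> real" where
  "coefs s2 0 = (1, 1)"
| "coefs s2 (Suc t) = (let (a, b) = coefs s2 t in
     ((1 - 2* s2) * a + 2*(1 - s2) * b, -2* s2*a + (1 - 2* s2) * b))"

definition gv :: "(nat \<Rightarrow> complex) \<Rightarrow> nat \<Rightarrow> nat \<Rightarrow> complex" where
  "gv psi g x = (if x = g then psi g else 0)"

definition wv :: "(nat \<Rightarrow> complex) \<Rightarrow> nat \<Rightarrow> nat \<Rightarrow> complex" where
  "wv psi g x = (if x = g then 0 else psi x)"

lemma sum_minus_one:
  fixes L :: nat
  assumes "g < L"
  shows "(\<Sum>x<L. f x) = f g + (\<Sum>x\<in>{..<L} - {g}. f x)"
  using assms by (subst sum.remove[of _ g]) auto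

lemma Qpow:
  assumes g: "g < L" and norm: "(\<Sum>x<L. (cmod (psi x))\<^sup>2) = 1"
  shows "(Qf L psi g ^^ t) psi = (\<lambda>x. complex_of_real (fst (coefs ((cmod (psi g))\<^sup>2) t)) * gv psi g x
            + complex_of_real (snd (coefs ((cmod (psi g))\<^sup>2) t)) * wv psi g x)"
proof (induction t)
  case 0
  show ?case by (auto simp: gv_def wv_def)
next
  case (Suc t)
  define s2 where "s2 = (cmod (psi g))\<^sup>2"
  obtain a b where ab: "coefs s2 t = (a, b)" by fastforce
  define c where "c = psi g"
  have s2c: "complex_of_real s2 = cnj c * c" unfolding s2_def c_def
    using complex_norm_square[of "psi g"] by (simp add: mult.commute)
  have rest: "(\<Sum>x\<in>{..<L} - {g}. cnj (psi x) * psi x) = complex_of_real (1 - s2)"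
  proof -
    have "complex_of_real 1 = (\<Sum>x<L. complex_of_real ((cmod (psi x))\<^sup>2))"
      using norm by (metis of_real_sum)
    also have "\<dots> = (\<Sum>x<L. cnj (psi x) * psi x)"
      by (intro sum.cong refl) (metis complex_norm_square mult.commute)
    also have "\<dots> = cnj c * c + (\<Sum>x\<in>{..<L} - {g}. cnj (psi x) * psi x)"
      unfolding c_def by (rule sum_minus_one[OF g])
    finally show ?thesis using s2c by (simp add: algebra_simps)
  qed
  define u where "u = (\<lambda>x. complex_of_real a * gv psi g x + complex_of_real b * wv psi g x)"
  have Su: "Sg g u = (\<lambda>x. - complex_of_real a * gv psi g x + complex_of_real b * wv psi g x)"
    unfolding Sg_def u_def by (auto simp: gv_def wv_def)
  have ip: "ipf L psi (Sg g u) = - complex_of_real a * complex_of_real s2 + complex_of_real b * complex_of_real (1 - s2)"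
  proof -
    have "ipf L psi (Sg g u) = (cnj (psi g) * (- complex_of_real a * c)) +
        (\<Sum>x\<in>{..<L} - {g}. cnj (psi x) * (complex_of_real b * psi x))"
      unfolding ipf_def Su using g
      by (subst sum_minus_one[OF g]) (auto simp: gv_def wv_def c_def intro!: sum.cong)
    also have "\<dots> = - complex_of_real a * (cnj c * c) + complex_of_real b * (\<Sum>x\<in>{..<L} - {g}. cnj (psi x) * psi x)"
      by (simp add: sum_distrib_left c_def algebra_simps)
    finally show ?thesis unfolding rest s2c .
  qed
  have "(Qf L psi g ^^ Suc t) psi = Qf L psi g u"
    using Suc.IH ab unfolding u_def s2_def by simp
  also have "\<dots> = (\<lambda>x. complex_of_real ((1 - 2* s2) * a + 2*(1 - s2) * b) * gv psi g x
            + complex_of_real (-2* s2*a + (1 - 2* s2) * b) * wv psi g x)"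
  proof
    fix x
    have px: "psi x = gv psi g x + wv psi g x" by (auto simp: gv_def wv_def)
    show "Qf L psi g u x = complex_of_real ((1 - 2* s2) * a + 2*(1 - s2) * b) * gv psi g x
            + complex_of_real (-2* s2*a + (1 - 2* s2) * b) * wv psi g x"
      unfolding Qf_def ip unfolding Su by (subst px) (simp add: algebra_simps)
  qed
  finally show ?case using ab unfolding s2_def by simp
qed

lemma coefs_trig:
  assumes "0 \<le> s2" "s2 \<le> 1"
  defines "th \<equiv> arcsin (sqrt s2)"
  shows "sqrt s2 * fst (coefs s2 t) = sin ((2 * real t + 1) * th) \<and>
         sqrt (1 - s2) * snd (coefs s2 t) = cos ((2 * real t + 1) * th)"
proof -
  have z: "0 \<le> sqrt s2" using assms by simp
  have le1: "sqrt s2 \<le> 1" "-1 \<le> sqrt s2" using assms z by (simp, linarith)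
  have s: "sin th = sqrt s2" unfolding th_def using le1 by (simp add: sin_arcsin)
  have c: "cos th = sqrt (1 - s2)" unfolding th_def using le1 assms
    by (simp add: cos_arcsin)
  show ?thesis
proof (induction t)
  case 0 show ?case using s c by simp
next
  case (Suc t)
  obtain a b where ab: "coefs s2 t = (a, b)" by fastforce
  define u where "u = (2 * real t + 1) * th"
  have IH: "sqrt s2 * a = sin u" "sqrt (1 - s2) * b = cos u" using Suc ab unfolding u_def by auto
  have ss: "sqrt s2 * sqrt s2 = s2" and cc: "sqrt (1 - s2) * sqrt (1 - s2) = 1 - s2"
    using assms by auto
  have c2: "cos (2*th) = 1 - 2 * s2" using cos_double_sin[of th] s assms by (simp add: power2_eq_square ss)
  have s2': "sin (2*th) = 2 * sqrt s2 * sqrt (1 - s2)" using sin_double[of th] s c by simp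
  have arg: "(2 * real (Suc t) + 1) * th = u + 2 * th" unfolding u_def by (simp add: algebra_simps)
  have "sqrt s2 * ((1 - 2* s2) * a + 2*(1 - s2) * b) = (1 - 2* s2) * (sqrt s2 * a) + 2 * sqrt s2 * sqrt (1 - s2) * (sqrt (1 - s2) * b)"
    using cc by (simp add: algebra_simps)
  also have "\<dots> = sin (u + 2*th)" unfolding IH sin_add c2 s2' by (simp add: algebra_simps)
  finally have A: "sqrt s2 * ((1 - 2* s2) * a + 2*(1 - s2) * b) = sin (u + 2*th)" .
  have "sqrt (1 - s2) * (-2* s2*a + (1 - 2* s2) * b) = - (2 * sqrt s2 * sqrt (1 - s2)) * (sqrt s2 * a) + (1 - 2* s2) * (sqrt (1 - s2) * b)"
    using ss by (simp add: algebra_simps)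
  also have "\<dots> = cos (u + 2*th)" unfolding IH cos_add c2 s2' by (simp add: algebra_simps)
  finally have B: "sqrt (1 - s2) * (-2* s2*a + (1 - 2* s2) * b) = cos (u + 2*th)" .
  show ?case using A B ab arg by simp
qed
qed

lemma norm_split:
  assumes g: "g < L" and norm: "(\<Sum>x<L. (cmod (psi x))\<^sup>2) = 1"
  shows "(\<Sum>x<L. (cmod (P * gv psi g x + Q * wv psi g x))\<^sup>2) =
     (cmod P)\<^sup>2 * (cmod (psi g))\<^sup>2 + (cmod Q)\<^sup>2 * (1 - (cmod (psi g))\<^sup>2)"
proof -
  have r: "(\<Sum>x\<in>{..<L} - {g}. (cmod (psi x))\<^sup>2) = 1 - (cmod (psi g))\<^sup>2"
    using norm sum_minus_one[OF g, of "\<lambda>x. (cmod (psi x))\<^sup>2"] by simp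
  have "(\<Sum>x<L. (cmod (P * gv psi g x + Q * wv psi g x))\<^sup>2) =
      (cmod (P * psi g))\<^sup>2 + (\<Sum>x\<in>{..<L} - {g}. (cmod Q)\<^sup>2 * (cmod (psi x))\<^sup>2)"
    by (subst sum_minus_one[OF g]) (auto simp: gv_def wv_def norm_mult power_mult_distrib intro!: sum.cong)
  also have "\<dots> = (cmod P)\<^sup>2 * (cmod (psi g))\<^sup>2 + (cmod Q)\<^sup>2 * (1 - (cmod (psi g))\<^sup>2)"
    unfolding sum_distrib_left[symmetric] r by (simp add: norm_mult power_mult_distrib)
  finally show ?thesis .
qed



lemma parallelogram_c: "(cmod (a + b))\<^sup>2 + (cmod (a - b))\<^sup>2 = 2 * (cmod a)\<^sup>2 + 2 * (cmod b)\<^sup>2"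
  by (simp only: cmod_power2) (simp add: power2_eq_square algebra_simps)

lemma sin_cis: "complex_of_real (sin x) = (cis x - cis (-x)) / (2 * \<i>)"
proof -
  have "2 * \<i> * complex_of_real (sin x) = cis x - cis (-x)" by (simp add: complex_eq_iff)
  then show ?thesis by (simp add: field_simps)
qed

lemma cos_cis: "complex_of_real (cos x) = (cis x + cis (-x)) / 2"
proof -
  have "2 * complex_of_real (cos x) = cis x + cis (-x)" by (simp add: complex_eq_iff)
  then show ?thesis by (simp add: field_simps)
qed

lemma sincos_parallel:
  "(cmod (\<Sum>t\<in>T. w t * complex_of_real (sin (h t))))\<^sup>2 + (cmod (\<Sum>t\<in>T. w t * complex_of_real (cos (h t))))\<^sup>2
   = ((cmod (\<Sum>t\<in>T. w t * cis (h t)))\<^sup>2 + (cmod (\<Sum>t\<in>T. w t * cis (- h t)))\<^sup>2) / 2"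
proof -
  define A where "A = (\<Sum>t\<in>T. w t * cis (h t))"
  define B where "B = (\<Sum>t\<in>T. w t * cis (- h t))"
  have "(\<Sum>t\<in>T. w t * complex_of_real (sin (h t))) = (\<Sum>t\<in>T. (w t * cis (h t) - w t * cis (- h t)) / (2 * \<i>))"
    by (rule sum.cong) (simp_all only: sin_cis times_divide_eq_right right_diff_distrib)
  also have "\<dots> = (A - B) / (2 * \<i>)"
    unfolding A_def B_def sum_divide_distrib[symmetric] sum_subtractf ..
  finally have s: "(\<Sum>t\<in>T. w t * complex_of_real (sin (h t))) = (A - B) / (2 * \<i>)" .
  have "(\<Sum>t\<in>T. w t * complex_of_real (cos (h t))) = (\<Sum>t\<in>T. (w t * cis (h t) + w t * cis (- h t)) / 2)"
    by (rule sum.cong) (simp_all only: cos_cis times_divide_eq_right distrib_left)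
  also have "\<dots> = (A + B) / 2"
    unfolding A_def B_def sum_divide_distrib[symmetric] sum.distrib ..
  finally have c: "(\<Sum>t\<in>T. w t * complex_of_real (cos (h t))) = (A + B) / 2" .
  have "(cmod ((A - B) / (2 * \<i>)))\<^sup>2 + (cmod ((A + B) / 2))\<^sup>2 = ((cmod (A + B))\<^sup>2 + (cmod (A - B))\<^sup>2) / 4"
    by (simp add: norm_divide norm_mult power_divide)
  also have "\<dots> = ((cmod A)\<^sup>2 + (cmod B)\<^sup>2) / 2" unfolding parallelogram_c by simp
  finally show ?thesis unfolding s c A_def B_def .
qed

definition Fq :: "nat \<Rightarrow> int \<Rightarrow> nat \<Rightarrow> nat \<Rightarrow> complex" where
  "Fq M sg b c = complex_of_real (1 / sqrt (real M)) * cis (2*pi*real c * of_int (sg * int b) / real M)"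

definition phase :: "real \<Rightarrow> real" where
  "phase s2 = arcsin (sqrt s2) / pi"

lemma colnorm:
  assumes g: "g < L" and norm: "(\<Sum>x<L. (cmod (psi x))\<^sup>2) = 1" and M: "0 < M"
  defines "s2 \<equiv> (cmod (psi g))\<^sup>2"
  shows "(\<Sum>x<L. (cmod (\<Sum>t<M. Fq M (-1) b t * (complex_of_real (1 / sqrt (real M)) * (Qf L psi g ^^ t) psi x)))\<^sup>2)
     = (Esum M (phase s2 - real b / real M) + Esum M (- phase s2 - real b / real M)) / 2"
proof -
  define r where "r = complex_of_real (1 / sqrt (real M))"
  define a where "a t = fst (coefs s2 t)" for t
  define bb where "bb t = snd (coefs s2 t)" for t
  define w where "w t = cis (2*pi*real t * of_int (- 1 * int b) / real M) / of_nat M" for t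
  define th where "th = arcsin (sqrt s2)"
  have s2b: "0 \<le> s2" "s2 \<le> 1"
  proof -
    show "0 \<le> s2" unfolding s2_def by simp
    have "(cmod (psi g))\<^sup>2 \<le> (\<Sum>x<L. (cmod (psi x))\<^sup>2)"
      using g by (intro member_le_sum) auto
    then show "s2 \<le> 1" using norm unfolding s2_def by simp
  qed
  have rr: "r * r = 1 / of_nat M" unfolding r_def using M
    by (simp flip: of_real_mult)
  have Fr: "Fq M (-1) b t * r = w t" for t
  proof -
    have "Fq M (-1) b t * r = (r * r) * cis (2*pi*real t * of_int (- 1 * int b) / real M)"
      unfolding Fq_def r_def by (simp only: mult_ac)
    then show ?thesis unfolding rr w_def by simp
  qed
  define P where "P = (\<Sum>t<M. w t * complex_of_real (a t))"
  define Q where "Q = (\<Sum>t<M. w t * complex_of_real (bb t))"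
  have expand: "(\<Sum>t<M. Fq M (-1) b t * (r * (Qf L psi g ^^ t) psi x)) = P * gv psi g x + Q * wv psi g x" for x
  proof -
    have "(\<Sum>t<M. Fq M (-1) b t * (r * (Qf L psi g ^^ t) psi x)) =
        (\<Sum>t<M. w t * (complex_of_real (a t) * gv psi g x + complex_of_real (bb t) * wv psi g x))"
      unfolding Qpow[OF g norm] s2_def[symmetric] a_def bb_def
      by (intro sum.cong refl) (simp add: Fr[symmetric] mult.assoc)
    also have "\<dots> = P * gv psi g x + Q * wv psi g x"
      unfolding P_def Q_def sum_distrib_right sum.distrib[symmetric] by (intro sum.cong refl) (simp add: algebra_simps)
    finally show ?thesis .
  qed
  have "(\<Sum>x<L. (cmod (\<Sum>t<M. Fq M (-1) b t * (r * (Qf L psi g ^^ t) psi x)))\<^sup>2)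
      = (cmod P)\<^sup>2 * s2 + (cmod Q)\<^sup>2 * (1 - s2)"
    unfolding expand s2_def by (rule norm_split[OF g norm])
  also have "\<dots> = (cmod (P * complex_of_real (sqrt s2)))\<^sup>2 + (cmod (Q * complex_of_real (sqrt (1 - s2))))\<^sup>2"
    using s2b by (simp add: norm_mult power_mult_distrib)
  also have "P * complex_of_real (sqrt s2) = (\<Sum>t<M. w t * complex_of_real (sin ((2 * real t + 1) * th)))"
    unfolding P_def sum_distrib_right th_def
    using coefs_trig[OF s2b] unfolding a_def
    by (intro sum.cong refl) (simp add: mult.assoc mult.commute[of "fst _"] flip: of_real_mult)
  also have "Q * complex_of_real (sqrt (1 - s2)) = (\<Sum>t<M. w t * complex_of_real (cos ((2 * real t + 1) * th)))"
    unfolding Q_def sum_distrib_right th_def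
    using coefs_trig[OF s2b] unfolding bb_def
    by (intro sum.cong refl) (simp add: mult.assoc mult.commute[of "snd _"] flip: of_real_mult)
  also have "(cmod (\<Sum>t<M. w t * complex_of_real (sin ((2 * real t + 1) * th))))\<^sup>2 +
      (cmod (\<Sum>t<M. w t * complex_of_real (cos ((2 * real t + 1) * th))))\<^sup>2 =
      ((cmod (\<Sum>t<M. w t * cis ((2 * real t + 1) * th)))\<^sup>2 + (cmod (\<Sum>t<M. w t * cis (- ((2 * real t + 1) * th))))\<^sup>2) / 2"
    by (rule sincos_parallel)
  also have "(cmod (\<Sum>t<M. w t * cis ((2 * real t + 1) * th)))\<^sup>2 = Esum M (phase s2 - real b / real M)"
  proof -
    have "(\<Sum>t<M. w t * cis ((2 * real t + 1) * th)) =
        cis th / of_nat M * (\<Sum>t<M. cis (2*pi*real t*(phase s2 - real b / real M)))"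
      unfolding sum_distrib_left w_def
    proof (intro sum.cong refl)
      fix t
      have e: "2*pi*real t * of_int (- 1 * int b) / real M + (2 * real t + 1) * th =
          th + 2*pi*real t*(th / pi - real b / real M)"
        using M pi_gt_zero by (simp add: field_simps)
      have "cis (2*pi*real t * of_int (- 1 * int b) / real M) * cis ((2 * real t + 1) * th) =
          cis th * cis (2*pi*real t*(phase s2 - real b / real M))"
        unfolding cis_mult phase_def th_def[symmetric] e ..
      then show "cis (2*pi*real t * of_int (- 1 * int b) / real M) / of_nat M * cis ((2 * real t + 1) * th) =
          cis th / of_nat M * cis (2*pi*real t*(phase s2 - real b / real M))"
        by (simp add: field_simps)
    qed
    then show ?thesis unfolding Esum_def by (simp add: norm_mult norm_divide power_divide)
  qed
  also have "(cmod (\<Sum>t<M. w t * cis (- ((2 * real t + 1) * th))))\<^sup>2 = Esum M (- phase s2 - real b / real M)"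
  proof -
    have "(\<Sum>t<M. w t * cis (- ((2 * real t + 1) * th))) =
        cis (- th) / of_nat M * (\<Sum>t<M. cis (2*pi*real t*(- phase s2 - real b / real M)))"
      unfolding sum_distrib_left w_def
    proof (intro sum.cong refl)
      fix t
      have e: "2*pi*real t * of_int (- 1 * int b) / real M + - ((2 * real t + 1) * th) =
          - th + 2*pi*real t*(- (th / pi) - real b / real M)"
        using M pi_gt_zero by (simp add: field_simps)
      have "cis (2*pi*real t * of_int (- 1 * int b) / real M) * cis (- ((2 * real t + 1) * th)) =
          cis (- th) * cis (2*pi*real t*(- phase s2 - real b / real M))"
        unfolding cis_mult phase_def th_def[symmetric] e ..
      then show "cis (2*pi*real t * of_int (- 1 * int b) / real M) / of_nat M * cis (- ((2 * real t + 1) * th)) =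
          cis (- th) / of_nat M * cis (2*pi*real t*(- phase s2 - real b / real M))"
        by (simp add: field_simps)
    qed
    then show ?thesis unfolding Esum_def by (simp add: norm_mult norm_divide power_divide)
  qed
  finally show ?thesis unfolding r_def .
qed



definition NegS0 :: "nat \<Rightarrow> nat \<Rightarrow> nat \<Rightarrow> nat \<Rightarrow> complex mat" where
  "NegS0 N l m j = Dmat N l m (\<lambda>x b. if b div 2^j mod 2 = 1 \<and> x \<noteq> 0 then -1 else 1)"

definition qblock :: "nat \<Rightarrow> nat \<Rightarrow> nat \<Rightarrow> nat \<Rightarrow> gate list" where
  "qblock N l m j = [SGate (Some j), AGate True (Some j), Fixed (NegS0 N l m j), AGate False (Some j)]"

definition stage :: "nat \<Rightarrow> nat \<Rightarrow> nat \<Rightarrow> nat \<Rightarrow> gate list" where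
  "stage N l m j = concat (replicate (2^j) (qblock N l m j))"

definition stages :: "nat \<Rightarrow> nat \<Rightarrow> nat \<Rightarrow> nat \<Rightarrow> gate list" where
  "stages N l m n = concat (map (stage N l m) [0..<n])"

definition psiv :: "(nat \<Rightarrow> complex mat) \<Rightarrow> nat \<Rightarrow> nat \<Rightarrow> complex" where
  "psiv A y x = A y $$ (x, 0)"

lemma run_nil[simp]: "run_circuit N l m A \<gamma> [] v = v"
  unfolding run_circuit_def by simp

lemma run_append: "run_circuit N l m A \<gamma> (xs @ ys) v = run_circuit N l m A \<gamma> ys (run_circuit N l m A \<gamma> xs v)"
  unfolding run_circuit_def by simp

lemma run_cons: "run_circuit N l m A \<gamma> (g # gs) v = run_circuit N l m A \<gamma> gs (gate_mat N l m A \<gamma> g *\<^sub>v v)"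
  unfolding run_circuit_def by simp

lemma refl_sum:
  assumes "x < 2^l" "g < 2^l"
  shows "(\<Sum>x'<2^l. refl_mat l g $$ (x,x') * u x') = Sg g u x"
proof -
  have "(\<Sum>x'<2^l. refl_mat l g $$ (x,x') * u x') = (\<Sum>x'<2^l. if x = x' then Sg g u x' else 0)"
    using assms by (intro sum.cong refl) (auto simp: refl_mat_def Sg_def)
  then show ?thesis using assms by simp
qed

lemma grover_id:
  assumes U: "unitary_mat L A" and x: "x < L" and L: "0 < L"
  shows "(\<Sum>x'<L. A $$ (x,x') * ((if x' \<noteq> 0 then -1 else 1) * (\<Sum>x''<L. cnj (A $$ (x'',x')) * v x'')))
     = 2 * (\<Sum>x''<L. cnj (A $$ (x'',0)) * v x'') * A $$ (x,0) - v x"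
proof -
  define B where "B x' = (\<Sum>x''<L. cnj (A $$ (x'',x')) * v x'')" for x'
  have split: "(\<Sum>x'<L. A $$ (x,x') * ((if x' \<noteq> 0 then -1 else 1) * B x')) =
      - (\<Sum>x'<L. A $$ (x,x') * B x') + 2 * (A $$ (x,0) * B 0)"
  proof -
    have "(\<Sum>x'<L. A $$ (x,x') * ((if x' \<noteq> 0 then -1 else 1) * B x')) =
        (\<Sum>x'<L. - (A $$ (x,x') * B x') + (if x' = 0 then 2 * (A $$ (x,x') * B x') else 0))"
      by (intro sum.cong refl) auto
    also have "\<dots> = - (\<Sum>x'<L. A $$ (x,x') * B x') + (\<Sum>x'<L. if x' = 0 then 2 * (A $$ (x,x') * B x') else 0)"
      by (simp only: sum.distrib sum_negf)
    also have "\<dots> = - (\<Sum>x'<L. A $$ (x,x') * B x') + 2 * (A $$ (x,0) * B 0)"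
      using L by simp
    finally show ?thesis .
  qed
  have "(\<Sum>x'<L. A $$ (x,x') * B x') = (\<Sum>x''<L. (\<Sum>x'<L. A $$ (x,x') * cnj (A $$ (x'',x'))) * v x'')"
    unfolding B_def sum_distrib_left sum_distrib_right
    by (subst sum.swap) (simp add: mult.assoc)
  also have "\<dots> = (\<Sum>x''<L. (if x = x'' then 1 else 0) * v x'')"
    using unitary_rows[OF U x] by (intro sum.cong refl) simp
  also have "\<dots> = v x" using x by (simp add: delta_sum)
  finally have "(\<Sum>x'<L. A $$ (x,x') * B x') = v x" .
  then show ?thesis unfolding B_def[symmetric] split by (simp add: algebra_simps)
qed

lemma qblock_run:
  assumes U: "\<forall>y<N. unitary_mat (2^l) (A y)" and G: "\<forall>y<N. \<gamma> y < 2^l"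
  shows "run_circuit N l m A \<gamma> (qblock N l m j) (svec N l m S) =
    svec N l m (\<lambda>y x b. if b div 2^j mod 2 = 1 then Qf (2^l) (psiv A y) (\<gamma> y) (\<lambda>x'. S y x' b) x else S y x b)"
proof -
  have "run_circuit N l m A \<gamma> (qblock N l m j) (svec N l m S) = svec N l m (\<lambda>y x b.
     if ctrl_ok (Some j) b then (\<Sum>x'<2^l. A y $$ (x,x') *
       ((if b div 2^j mod 2 = 1 \<and> x' \<noteq> 0 then -1 else 1) *
       (if ctrl_ok (Some j) b then (\<Sum>x''<2^l. mat_adjoint (A y) $$ (x',x'') *
          (if ctrl_ok (Some j) b then (\<Sum>x3<2^l. refl_mat l (\<gamma> y) $$ (x'',x3) * S y x3 b) else S y x'' b))
        else (if ctrl_ok (Some j) b then (\<Sum>x3<2^l. refl_mat l (\<gamma> y) $$ (x',x3) * S y x3 b) else S y x' b))))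
     else ((if b div 2^j mod 2 = 1 \<and> x \<noteq> 0 then -1 else 1) *
       (if ctrl_ok (Some j) b then (\<Sum>x''<2^l. mat_adjoint (A y) $$ (x,x'') *
          (if ctrl_ok (Some j) b then (\<Sum>x3<2^l. refl_mat l (\<gamma> y) $$ (x'',x3) * S y x3 b) else S y x'' b))
        else (if ctrl_ok (Some j) b then (\<Sum>x3<2^l. refl_mat l (\<gamma> y) $$ (x,x3) * S y x3 b) else S y x b))))"
    unfolding qblock_def run_cons run_nil gate_mat.simps ctrl_apply NegS0_def Dmat_apply if_True if_False ..
  also have "\<dots> = svec N l m (\<lambda>y x b. if b div 2^j mod 2 = 1 then Qf (2^l) (psiv A y) (\<gamma> y) (\<lambda>x'. S y x' b) x else S y x b)"
  proof (rule svec_cong)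
    fix y x b :: nat assume y: "y < N" and x: "x < 2^l" and b: "b < 2^m"
    have Uy: "unitary_mat (2^l) (A y)" using U y by auto
    have gy: "\<gamma> y < 2^l" using G y by auto
    have Ac: "A y \<in> carrier_mat (2^l) (2^l)" using Uy unitary_dim by auto
    show "(if ctrl_ok (Some j) b then (\<Sum>x'<2^l. A y $$ (x,x') *
       ((if b div 2^j mod 2 = 1 \<and> x' \<noteq> 0 then -1 else 1) *
       (if ctrl_ok (Some j) b then (\<Sum>x''<2^l. mat_adjoint (A y) $$ (x',x'') *
          (if ctrl_ok (Some j) b then (\<Sum>x3<2^l. refl_mat l (\<gamma> y) $$ (x'',x3) * S y x3 b) else S y x'' b))
        else (if ctrl_ok (Some j) b then (\<Sum>x3<2^l. refl_mat l (\<gamma> y) $$ (x',x3) * S y x3 b) else S y x' b))))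
     else ((if b div 2^j mod 2 = 1 \<and> x \<noteq> 0 then -1 else 1) *
       (if ctrl_ok (Some j) b then (\<Sum>x''<2^l. mat_adjoint (A y) $$ (x,x'') *
          (if ctrl_ok (Some j) b then (\<Sum>x3<2^l. refl_mat l (\<gamma> y) $$ (x'',x3) * S y x3 b) else S y x'' b))
        else (if ctrl_ok (Some j) b then (\<Sum>x3<2^l. refl_mat l (\<gamma> y) $$ (x,x3) * S y x3 b) else S y x b))))
      = (if b div 2^j mod 2 = 1 then Qf (2^l) (psiv A y) (\<gamma> y) (\<lambda>x'. S y x' b) x else S y x b)"
    proof (cases "b div 2^j mod 2 = 1")
      case False
      then show ?thesis by (simp add: ctrl_ok_def)
    next
      case True
      have c: "ctrl_ok (Some j) b" using True by (simp add: ctrl_ok_def)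
      have "(\<Sum>x'<2^l. A y $$ (x,x') *
       ((if b div 2^j mod 2 = 1 \<and> x' \<noteq> 0 then -1 else 1) *
       (\<Sum>x''<2^l. mat_adjoint (A y) $$ (x',x'') * (\<Sum>x3<2^l. refl_mat l (\<gamma> y) $$ (x'',x3) * S y x3 b)))) =
       (\<Sum>x'<2^l. A y $$ (x,x') *
       ((if x' \<noteq> 0 then -1 else 1) *
       (\<Sum>x''<2^l. cnj (A y $$ (x'',x')) * Sg (\<gamma> y) (\<lambda>x'. S y x' b) x'')))"
        using True Ac gy by (intro sum.cong refl) (auto simp: refl_sum intro!: sum.cong)
      also have "\<dots> = 2 * (\<Sum>x''<2^l. cnj (A y $$ (x'',0)) * Sg (\<gamma> y) (\<lambda>x'. S y x' b) x'') * A y $$ (x,0)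
          - Sg (\<gamma> y) (\<lambda>x'. S y x' b) x"
        by (rule grover_id[OF Uy x]) simp
      also have "\<dots> = Qf (2^l) (psiv A y) (\<gamma> y) (\<lambda>x'. S y x' b) x"
        unfolding Qf_def ipf_def psiv_def by simp
      finally show ?thesis using c True by simp
    qed
  qed
  finally show ?thesis .
qed



lemma Sg_scale: "Sg g (\<lambda>x. c * u x) = (\<lambda>x. c * Sg g u x)"
  unfolding Sg_def by auto

lemma ipf_scale: "ipf L psi (\<lambda>x. c * v x) = c * ipf L psi v"
  unfolding ipf_def sum_distrib_left by (simp add: mult.left_commute)

lemma Qf_scale: "Qf L psi g (\<lambda>x. c * u x) = (\<lambda>x. c * Qf L psi g u x)"
  unfolding Qf_def Sg_scale ipf_scale by (simp add: algebra_simps)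

lemma Qf_pow_scale: "(Qf L psi g ^^ n) (\<lambda>x. c * u x) = (\<lambda>x. c * (Qf L psi g ^^ n) u x)"
  by (induction n) (auto simp: Qf_scale)

lemma rep_run:
  assumes U: "\<forall>y<N. unitary_mat (2^l) (A y)" and G: "\<forall>y<N. \<gamma> y < 2^l"
  shows "run_circuit N l m A \<gamma> (concat (replicate n (qblock N l m j))) (svec N l m S) =
    svec N l m (\<lambda>y x b. if b div 2^j mod 2 = 1 then (Qf (2^l) (psiv A y) (\<gamma> y) ^^ n) (\<lambda>x'. S y x' b) x else S y x b)"
proof (induction n arbitrary: S)
  case 0
  show ?case by (simp, rule svec_cong, simp)
next
  case (Suc n)
  have "run_circuit N l m A \<gamma> (concat (replicate (Suc n) (qblock N l m j))) (svec N l m S) =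
     run_circuit N l m A \<gamma> (concat (replicate n (qblock N l m j)))
       (svec N l m (\<lambda>y x b. if b div 2^j mod 2 = 1 then Qf (2^l) (psiv A y) (\<gamma> y) (\<lambda>x'. S y x' b) x else S y x b))"
  proof -
    have e: "concat (replicate (Suc n) (qblock N l m j)) = qblock N l m j @ concat (replicate n (qblock N l m j))"
      by simp
    show ?thesis unfolding e run_append qblock_run[OF U G] ..
  qed
  also have "\<dots> = svec N l m (\<lambda>y x b. if b div 2^j mod 2 = 1 then (Qf (2^l) (psiv A y) (\<gamma> y) ^^ Suc n) (\<lambda>x'. S y x' b) x else S y x b)"
    unfolding Suc.IH by (rule svec_cong) (simp add: funpow_swap1)
  finally show ?case .
qed

lemma stages_run:
  assumes U: "\<forall>y<N. unitary_mat (2^l) (A y)" and G: "\<forall>y<N. \<gamma> y < 2^l"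
  shows "run_circuit N l m A \<gamma> (stages N l m n) (svec N l m (\<lambda>y x b. c y * psiv A y x)) =
    svec N l m (\<lambda>y x b. c y * (Qf (2^l) (psiv A y) (\<gamma> y) ^^ (b mod 2^n)) (psiv A y) x)"
proof (induction n)
  case 0
  show ?case by (simp add: stages_def)
next
  case (Suc n)
  have st: "stages N l m (Suc n) = stages N l m n @ stage N l m n"
    unfolding stages_def by simp
  have "run_circuit N l m A \<gamma> (stages N l m (Suc n)) (svec N l m (\<lambda>y x b. c y * psiv A y x)) =
    svec N l m (\<lambda>y x b. if b div 2^n mod 2 = 1 then (Qf (2^l) (psiv A y) (\<gamma> y) ^^ 2^n)
       (\<lambda>x'. c y * (Qf (2^l) (psiv A y) (\<gamma> y) ^^ (b mod 2^n)) (psiv A y) x') x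
       else c y * (Qf (2^l) (psiv A y) (\<gamma> y) ^^ (b mod 2^n)) (psiv A y) x)"
    unfolding st run_append Suc.IH stage_def by (rule rep_run[OF U G])
  also have "\<dots> = svec N l m (\<lambda>y x b. c y * (Qf (2^l) (psiv A y) (\<gamma> y) ^^ (b mod 2^Suc n)) (psiv A y) x)"
  proof (rule svec_cong)
    fix y x b :: nat
    have md: "b mod 2^Suc n = 2^n * (b div 2^n mod 2) + b mod 2^n"
      by (metis mod_mult2_eq power_Suc2)
    have "b div 2^n mod 2 = 0 \<or> b div 2^n mod 2 = 1" by auto
    then show "(if b div 2^n mod 2 = 1 then (Qf (2^l) (psiv A y) (\<gamma> y) ^^ 2^n)
       (\<lambda>x'. c y * (Qf (2^l) (psiv A y) (\<gamma> y) ^^ (b mod 2^n)) (psiv A y) x') x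
       else c y * (Qf (2^l) (psiv A y) (\<gamma> y) ^^ (b mod 2^n)) (psiv A y) x) =
       c y * (Qf (2^l) (psiv A y) (\<gamma> y) ^^ (b mod 2^Suc n)) (psiv A y) x"
      unfolding md Qf_pow_scale by (auto simp: funpow_add)
  qed
  finally show ?case .
qed

lemma Fq_zero: "Fq M 1 b 0 = complex_of_real (1 / sqrt (real M))"
  unfolding Fq_def by simp

definition FinM :: "nat \<Rightarrow> nat \<Rightarrow> nat \<Rightarrow> complex mat" where
  "FinM N l m = Fmat N l m (Fq (2^m) 1)"

definition FoutM :: "nat \<Rightarrow> nat \<Rightarrow> nat \<Rightarrow> complex mat" where
  "FoutM N l m = Fmat N l m (Fq (2^m) (-1))"

definition circ :: "nat \<Rightarrow> nat \<Rightarrow> nat \<Rightarrow> gate list" where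
  "circ N l m = [Fixed (FinM N l m), AGate False None] @ stages N l m m @ [Fixed (FoutM N l m)]"

definition Tf0 :: "nat \<Rightarrow> nat \<Rightarrow> (nat \<Rightarrow> complex mat) \<Rightarrow> (nat \<Rightarrow> nat) \<Rightarrow> nat \<Rightarrow> nat \<Rightarrow> nat \<Rightarrow> complex" where
  "Tf0 l m A \<gamma> y x b = (\<Sum>t<2^m. Fq (2^m) (-1) b t *
      (complex_of_real (1 / sqrt (real (2^m))) * (Qf (2^l) (psiv A y) (\<gamma> y) ^^ t) (psiv A y) x))"

lemma init_svec: "init_state N l m \<alpha> = svec N l m (\<lambda>y x b. \<alpha> y * (if x = 0 \<and> b = 0 then 1 else 0))"
  unfolding init_state_def by (rule svec_eqI) auto

lemma circ_run:
  assumes U: "\<forall>y<N. unitary_mat (2^l) (A y)" and G: "\<forall>y<N. \<gamma> y < 2^l"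
  shows "run_circuit N l m A \<gamma> (circ N l m) (init_state N l m \<alpha>) = svec N l m (\<lambda>y x b. \<alpha> y * Tf0 l m A \<gamma> y x b)"
proof -
  define r where "r = complex_of_real (1 / sqrt (real (2^m::nat)))"
  have "gate_mat N l m A \<gamma> (Fixed (FinM N l m)) *\<^sub>v init_state N l m \<alpha> =
     svec N l m (\<lambda>y x b. \<Sum>b'<2^m. Fq (2^m) 1 b b' * (\<alpha> y * (if x = 0 \<and> b' = 0 then 1 else 0)))"
    unfolding init_svec gate_mat.simps FinM_def Fmat_apply ..
  also have "\<dots> = svec N l m (\<lambda>y x b. (\<alpha> y * r) * (if x = 0 then 1 else 0))"
  proof (rule svec_cong)
    fix y x b :: nat
    have "(\<Sum>b'<(2::nat)^m. Fq (2^m) 1 b b' * (\<alpha> y * (if x = 0 \<and> b' = 0 then 1 else 0))) =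
        (\<Sum>b'<(2::nat)^m. if b' = 0 then Fq (2^m) 1 b 0 * (\<alpha> y * (if x = 0 then 1 else 0)) else 0)"
      by (intro sum.cong refl) auto
    also have "\<dots> = (\<alpha> y * r) * (if x = 0 then 1 else 0)"
      by (simp add: Fq_zero r_def)
    finally show "(\<Sum>b'<(2::nat)^m. Fq (2^m) 1 b b' * (\<alpha> y * (if x = 0 \<and> b' = 0 then 1 else 0))) =
       (\<alpha> y * r) * (if x = 0 then 1 else 0)" .
  qed
  finally have s1: "gate_mat N l m A \<gamma> (Fixed (FinM N l m)) *\<^sub>v init_state N l m \<alpha> =
     svec N l m (\<lambda>y x b. (\<alpha> y * r) * (if x = 0 then 1 else 0))" .
  have "gate_mat N l m A \<gamma> (AGate False None) *\<^sub>v svec N l m (\<lambda>y x b. (\<alpha> y * r) * (if x = 0 then 1 else 0)) =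
      svec N l m (\<lambda>y x b. \<Sum>x'<2^l. A y $$ (x,x') * ((\<alpha> y * r) * (if x' = 0 then 1 else 0)))"
    unfolding gate_mat.simps ctrl_apply by (simp add: ctrl_ok_def)
  also have "\<dots> = svec N l m (\<lambda>y x b. (\<alpha> y * r) * psiv A y x)"
  proof (rule svec_cong)
    fix y x b :: nat
    have "(\<Sum>x'<(2::nat)^l. A y $$ (x,x') * ((\<alpha> y * r) * (if x' = 0 then 1 else 0))) =
        (\<Sum>x'<(2::nat)^l. if x' = 0 then (\<alpha> y * r) * A y $$ (x,0) else 0)"
      by (intro sum.cong refl) auto
    then show "(\<Sum>x'<(2::nat)^l. A y $$ (x,x') * ((\<alpha> y * r) * (if x' = 0 then 1 else 0))) = (\<alpha> y * r) * psiv A y x"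
      by (simp add: psiv_def)
  qed
  finally have s2: "gate_mat N l m A \<gamma> (AGate False None) *\<^sub>v svec N l m (\<lambda>y x b. (\<alpha> y * r) * (if x = 0 then 1 else 0)) =
      svec N l m (\<lambda>y x b. (\<alpha> y * r) * psiv A y x)" .
  have s3: "run_circuit N l m A \<gamma> (stages N l m m) (svec N l m (\<lambda>y x b. (\<alpha> y * r) * psiv A y x)) =
     svec N l m (\<lambda>y x b. (\<alpha> y * r) * (Qf (2^l) (psiv A y) (\<gamma> y) ^^ (b mod 2^m)) (psiv A y) x)"
    by (rule stages_run[OF U G])
  have "gate_mat N l m A \<gamma> (Fixed (FoutM N l m)) *\<^sub>v svec N l m (\<lambda>y x b. (\<alpha> y * r) * (Qf (2^l) (psiv A y) (\<gamma> y) ^^ (b mod 2^m)) (psiv A y) x)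
     = svec N l m (\<lambda>y x b. \<Sum>b'<2^m. Fq (2^m) (-1) b b' * ((\<alpha> y * r) * (Qf (2^l) (psiv A y) (\<gamma> y) ^^ (b' mod 2^m)) (psiv A y) x))"
    unfolding gate_mat.simps FoutM_def Fmat_apply ..
  also have "\<dots> = svec N l m (\<lambda>y x b. \<alpha> y * Tf0 l m A \<gamma> y x b)"
  proof (rule svec_cong)
    fix y x b :: nat
    show "(\<Sum>b'<2^m. Fq (2^m) (-1) b b' * ((\<alpha> y * r) * (Qf (2^l) (psiv A y) (\<gamma> y) ^^ (b' mod 2^m)) (psiv A y) x))
       = \<alpha> y * Tf0 l m A \<gamma> y x b"
      unfolding Tf0_def sum_distrib_left r_def by (intro sum.cong refl) (simp add: algebra_simps)
  qed
  finally have s4: "gate_mat N l m A \<gamma> (Fixed (FoutM N l m)) *\<^sub>v svec N l m (\<lambda>y x b. (\<alpha> y * r) * (Qf (2^l) (psiv A y) (\<gamma> y) ^^ (b mod 2^m)) (psiv A y) x)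
     = svec N l m (\<lambda>y x b. \<alpha> y * Tf0 l m A \<gamma> y x b)" .
  show ?thesis
    unfolding circ_def run_append run_cons run_nil s1 s2 s3 s4 ..
qed



lemma cnt_rep: "length (filter P (concat (replicate n xs))) = n * length (filter P xs)"
  by (induction n) auto

lemma cnt_stages: "length (filter is_AGate (stages N l m n)) + 2 = 2^(n+1)"
proof (induction n)
  case 0 then show ?case by (simp add: stages_def)
next
  case (Suc n)
  have st: "stages N l m (Suc n) = stages N l m n @ stage N l m n"
    unfolding stages_def by simp
  have "length (filter is_AGate (stage N l m n)) = 2^n * 2"
    unfolding stage_def cnt_rep by (simp add: qblock_def)
  then show ?case using Suc st by simp
qed

lemma cnt_circ: "length (filter is_AGate (circ N l m)) + 1 = 2^(m+1)"
  using cnt_stages[of N l m m] by (simp add: circ_def)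

lemma Fq_orth:
  assumes M: "0 < M" and sg: "sg = 1 \<or> sg = -1" and b: "b < M" and b': "b' < M"
  shows "(\<Sum>c<M. Fq M sg b c * cnj (Fq M sg b' c)) = (if b = b' then 1 else 0)"
proof -
  have r: "complex_of_real (1 / sqrt (real M)) * cnj (complex_of_real (1 / sqrt (real M))) = 1 / of_nat M"
    using M by (simp flip: of_real_mult)
  have "(\<Sum>c<M. Fq M sg b c * cnj (Fq M sg b' c)) =
      (\<Sum>c<M. (1 / of_nat M) * cis (2*pi*real c * of_int (sg * (int b - int b')) / real M))"
  proof (intro sum.cong refl)
    fix c
    have "Fq M sg b c * cnj (Fq M sg b' c) = (complex_of_real (1 / sqrt (real M)) * cnj (complex_of_real (1 / sqrt (real M)))) *
       (cis (2*pi*real c * of_int (sg * int b) / real M) * cis (- (2*pi*real c * of_int (sg * int b') / real M)))"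
      unfolding Fq_def by (simp add: cis_cnj mult_ac)
    also have "\<dots> = (1 / of_nat M) * cis (2*pi*real c * of_int (sg * (int b - int b')) / real M)"
      unfolding r cis_mult by (simp add: algebra_simps diff_divide_distrib)
    finally show "Fq M sg b c * cnj (Fq M sg b' c) = (1 / of_nat M) * cis (2*pi*real c * of_int (sg * (int b - int b')) / real M)" .
  qed
  also have "\<dots> = (1 / of_nat M) * (if int M dvd (sg * (int b - int b')) then of_nat M else 0)"
    unfolding sum_distrib_left[symmetric] orth_sum[OF M] ..
  also have "\<dots> = (if b = b' then 1 else 0)"
  proof -
    have m: "int M dvd (int b' - int b) \<longleftrightarrow> int M dvd (int b - int b')"
      by (metis dvd_minus_iff minus_diff_eq)
    have "int M dvd (sg * (int b - int b')) \<longleftrightarrow> int M dvd (int b - int b')"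
      using sg m by auto
    then show ?thesis using dvd_small_int[of M b b'] b b' M by auto
  qed
  finally show ?thesis .
qed

lemma FinM_unitary: "unitary_mat (dimH N l m) (FinM N l m)"
  unfolding FinM_def by (rule Fmat_unitary) (rule Fq_orth, auto)

lemma FoutM_unitary: "unitary_mat (dimH N l m) (FoutM N l m)"
  unfolding FoutM_def by (rule Fmat_unitary) (rule Fq_orth, auto)

lemma NegS0_unitary: "unitary_mat (dimH N l m) (NegS0 N l m j)"
  unfolding NegS0_def by (rule Dmat_unitary) auto

lemma fixed_in_stages: "Fixed U \<in> set (stages N l m n) \<Longrightarrow> \<exists>j. U = NegS0 N l m j"
  unfolding stages_def stage_def qblock_def by (auto split: if_splits)

lemma circ_valid: "valid_circuit N l m (circ N l m)"
  unfolding valid_circuit_def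
proof (intro allI impI)
  fix U assume "Fixed U \<in> set (circ N l m)"
  then have "U = FinM N l m \<or> U = FoutM N l m \<or> Fixed U \<in> set (stages N l m m)"
    by (auto simp: circ_def)
  then show "unitary_mat (dimH N l m) U"
  proof (elim disjE)
    assume "Fixed U \<in> set (stages N l m m)"
    then obtain j where "U = NegS0 N l m j" using fixed_in_stages by blast
    then show ?thesis using NegS0_unitary by simp
  qed (auto simp: FinM_unitary FoutM_unitary)
qed

lemma sin2_shift: fixes a :: real shows "(sin (a - of_int q * pi))\<^sup>2 = (sin a)\<^sup>2"
proof -
  have s: "sin (of_int q * pi) = 0" using sin_npi_int[of q] by (simp add: mult.commute)
  have c: "(cos (of_int q * pi))\<^sup>2 = 1" using sin_cos_squared_add[of "of_int q * pi"] s by simp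
  show ?thesis unfolding Transcendental.sin_diff s using c by (simp add: power_mult_distrib)
qed

lemma sin2_lip: fixes a c :: real shows "\<bar>(sin a)\<^sup>2 - (sin c)\<^sup>2\<bar> \<le> \<bar>a - c\<bar>"
proof -
  have eq: "sin (a + c) * sin (a - c) = (sin a)\<^sup>2 - (sin c)\<^sup>2"
  proof -
    have "sin (a + c) * sin (a - c) = (sin a * cos c)\<^sup>2 - (cos a * sin c)\<^sup>2"
      unfolding Transcendental.sin_add Transcendental.sin_diff by (simp add: power2_eq_square algebra_simps)
    also have "\<dots> = (sin a)\<^sup>2 * (1 - (sin c)\<^sup>2) - (1 - (sin a)\<^sup>2) * (sin c)\<^sup>2"
      by (simp add: power_mult_distrib cos_squared_eq)
    also have "\<dots> = (sin a)\<^sup>2 - (sin c)\<^sup>2" by (simp add: algebra_simps)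
    finally show ?thesis .
  qed
  have "(sin a)\<^sup>2 - (sin c)\<^sup>2 = sin (a + c) * sin (a - c)" using eq by simp
  then have "\<bar>(sin a)\<^sup>2 - (sin c)\<^sup>2\<bar> = \<bar>sin (a + c)\<bar> * \<bar>sin (a - c)\<bar>" by (simp add: abs_mult)
  also have "\<dots> \<le> 1 * \<bar>a - c\<bar>"
    by (intro mult_mono abs_sin_le_one abs_sin_x_le_abs_x) auto
  finally show ?thesis by simp
qed

lemma m_bounds:
  fixes eps :: real
  assumes "0 < eps" "eps \<le> 1"
  defines "m \<equiv> nat \<lceil>log 2 (1 / eps)\<rceil>"
  shows "1 / eps \<le> 2^m" "2^m < 2 / eps"
proof -
  have l0: "0 \<le> log 2 (1 / eps)" using assms by simp
  have rm: "real m = of_int \<lceil>log 2 (1 / eps)\<rceil>" unfolding m_def using l0 by simp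
  have p: "(2::real)^m = 2 powr (real m)" by (simp add: powr_realpow)
  have pl: "2 powr (log 2 (1 / eps)) = 1 / eps" using assms by simp
  have "2 powr (log 2 (1 / eps)) \<le> 2 powr (real m)"
    unfolding rm by (intro powr_mono) auto
  then show "1 / eps \<le> 2^m" unfolding p pl .
  have "2 powr (real m) < 2 powr (log 2 (1 / eps) + 1)"
    unfolding rm by (intro powr_less_mono) linarith+
  also have "\<dots> = 2 / eps" using pl by (simp add: powr_add)
  finally show "2^m < 2 / eps" unfolding p .
qed



lemma psi_norm:
  assumes U: "unitary_mat L A" and L: "0 < L"
  shows "(\<Sum>x<L. (cmod (A $$ (x,0)))\<^sup>2) = 1"
proof -
  have "complex_of_real (\<Sum>x<L. (cmod (A $$ (x,0)))\<^sup>2) = (\<Sum>x<L. cnj (A $$ (x,0)) * A $$ (x,0))"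
    unfolding of_real_sum by (intro sum.cong refl) (metis complex_norm_square mult.commute)
  also have "\<dots> = 1" using unitary_cols[OF U L L] by simp
  finally show ?thesis by (metis of_real_eq_1_iff)
qed

lemma good_lemma:
  fixes eps x :: real
  assumes eps: "0 < eps" and Me: "1 / eps \<le> 2^m" and sx: "(sin (pi * x / 2^m))\<^sup>2 = s2"
    and k: "\<bar>x - real_of_int k\<bar> \<le> 20"
  shows "\<bar>(sin (real (nat (k mod int (2^m))) * pi / 2^m))\<^sup>2 - s2\<bar> \<le> 80 * eps"
proof -
  define Mr where "Mr = (2::real)^m"
  have Mp: "0 < Mr" unfolding Mr_def by simp
  have r: "real (nat (k mod int (2^m))) = real_of_int k - Mr * real_of_int (k div int (2^m))"
  proof -
    have "real (nat (k mod int (2^m))) = real_of_int (k mod int (2^m))" by simp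
    also have "\<dots> = real_of_int k - real_of_int (int (2^m) * (k div int (2^m)))"
    proof -
      have "k mod int (2^m) = k - int (2^m) * (k div int (2^m))" using minus_mult_div_eq_mod[of k "int (2^m)"] by simp
      then show ?thesis by simp
    qed
    finally show ?thesis unfolding Mr_def by simp
  qed
  have ang: "real (nat (k mod int (2^m))) * pi / 2^m = pi * real_of_int k / Mr - real_of_int (k div int (2^m)) * pi"
  proof -
    have "real (nat (k mod int (2^m))) * pi / 2^m = (real_of_int k - Mr * real_of_int (k div int (2^m))) * pi / Mr"
      unfolding r Mr_def ..
    also have "\<dots> = pi * real_of_int k / Mr - real_of_int (k div int (2^m)) * pi"
      using Mp by (simp add: diff_divide_distrib left_diff_distrib)
    finally show ?thesis .
  qed
  have "(sin (real (nat (k mod int (2^m))) * pi / 2^m))\<^sup>2 = (sin (pi * real_of_int k / Mr))\<^sup>2"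
    unfolding ang by (rule sin2_shift)
  then have "\<bar>(sin (real (nat (k mod int (2^m))) * pi / 2^m))\<^sup>2 - s2\<bar> =
      \<bar>(sin (pi * real_of_int k / Mr))\<^sup>2 - (sin (pi * x / Mr))\<^sup>2\<bar>"
    using sx unfolding Mr_def by simp
  also have "\<dots> \<le> \<bar>pi * real_of_int k / Mr - pi * x / Mr\<bar>" by (rule sin2_lip)
  also have "\<dots> = \<bar>pi * (real_of_int k - x) / Mr\<bar>"
    by (simp only: diff_divide_distrib right_diff_distrib)
  also have "\<dots> = pi * \<bar>x - real_of_int k\<bar> / Mr"
    using Mp by (simp add: abs_mult abs_minus_commute)
  also have "\<dots> \<le> 4 * 20 / Mr"
    using k pi_less_4 Mp by (intro divide_right_mono mult_mono) auto
  also have "\<dots> \<le> 80 * eps"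
  proof -
    have "1 / Mr \<le> eps" using Me eps Mp unfolding Mr_def by (simp add: field_simps)
    then show ?thesis by (simp add: divide_inverse)
  qed
  finally show ?thesis .
qed


lemma idx_lt: "x < (L::nat) \<Longrightarrow> b < M \<Longrightarrow> x * M + b < L * M"
proof -
  assume "x < L" "b < M"
  then have "x * M + b < (x + 1) * M" by simp
  also have "\<dots> \<le> L * M" using \<open>x < L\<close> by (intro mult_right_mono) auto
  finally show ?thesis .
qed

definition Phi :: "nat \<Rightarrow> nat \<Rightarrow> (nat \<Rightarrow> complex mat) \<Rightarrow> (nat \<Rightarrow> nat) \<Rightarrow> nat \<Rightarrow> complex vec" where
  "Phi l m A \<gamma> y = vec (2^l * 2^m) (\<lambda>i. Tf0 l m A \<gamma> y (i div 2^m) (i mod 2^m))"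

lemma prob_form:
  assumes U: "unitary_mat (2^l) (A y)" and g: "\<gamma> y < 2^l"
  defines "s2 \<equiv> (cmod (A y $$ (\<gamma> y, 0)))\<^sup>2"
  shows "prob_last l m (Phi l m A \<gamma> y) P = (\<Sum>b<2^m. if P b then
     (Esum (2^m) (phase s2 - real b / real (2^m)) + Esum (2^m) (- phase s2 - real b / real (2^m))) / 2 else 0)"
proof -
  have "prob_last l m (Phi l m A \<gamma> y) P = (\<Sum>x<2^l. \<Sum>b<(2::nat)^m. if P b then (cmod (Tf0 l m A \<gamma> y x b))\<^sup>2 else 0)"
    unfolding prob_last_def sum_mult_split Phi_def
    by (intro sum.cong refl) (auto simp: idx_lt)
  also have "\<dots> = (\<Sum>b<(2::nat)^m. \<Sum>x<2^l. if P b then (cmod (Tf0 l m A \<gamma> y x b))\<^sup>2 else 0)"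
    by (rule sum.swap)
  also have "\<dots> = (\<Sum>b<(2::nat)^m. if P b then (\<Sum>x<2^l. (cmod (Tf0 l m A \<gamma> y x b))\<^sup>2) else 0)"
    by (intro sum.cong refl) auto
  also have "\<dots> = (\<Sum>b<2^m. if P b then
     (Esum (2^m) (phase s2 - real b / real (2^m)) + Esum (2^m) (- phase s2 - real b / real (2^m))) / 2 else 0)"
  proof (intro sum.cong refl)
    fix b
    have n: "(\<Sum>x<2^l. (cmod (psiv A y x))\<^sup>2) = 1" unfolding psiv_def by (rule psi_norm[OF U]) simp
    have "(\<Sum>x<2^l. (cmod (Tf0 l m A \<gamma> y x b))\<^sup>2) =
       (Esum (2^m) (phase s2 - real b / real (2^m)) + Esum (2^m) (- phase s2 - real b / real (2^m))) / 2"
    proof -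
      have pg: "psiv A y (\<gamma> y) = A y $$ (\<gamma> y, 0)" by (simp add: psiv_def)
      show ?thesis unfolding Tf0_def s2_def using colnorm[OF g n, of "2^m" b] unfolding pg by simp
    qed
    then show "(if P b then (\<Sum>x<2^l. (cmod (Tf0 l m A \<gamma> y x b))\<^sup>2) else 0) = (if P b then
     (Esum (2^m) (phase s2 - real b / real (2^m)) + Esum (2^m) (- phase s2 - real b / real (2^m))) / 2 else 0)"
      by simp
  qed
  finally show ?thesis .
qed



lemma query_bound:
  fixes eps :: real
  assumes "0 < eps" "eps \<le> 1"
  shows "real (num_queries k (circ N l (nat \<lceil>log 2 (1 / eps)\<rceil>))) \<le> 4 * real k / eps"
proof -
  define m where "m = nat \<lceil>log 2 (1 / eps)\<rceil>"
  have mb: "(2::real)^m < 2 / eps" unfolding m_def by (rule m_bounds(2)[OF assms])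
  have c: "length (filter is_AGate (circ N l m)) \<le> 2 * 2^m"
    using cnt_circ[of N l m] by simp
  have "real (num_queries k (circ N l m)) = real k * real (length (filter is_AGate (circ N l m)))"
    unfolding num_queries_def by simp
  also have "\<dots> \<le> real k * (2 * 2^m)"
    using of_nat_le_iff[THEN iffD2, OF c] by (intro mult_left_mono) auto
  also have "\<dots> \<le> real k * (2 * (2 / eps))"
    using mb by (intro mult_left_mono) auto
  also have "\<dots> = 4 * real k / eps" by simp
  finally show ?thesis unfolding m_def .
qed

lemma mod_split_idx:
  fixes i :: nat
  shows "(i mod (2^l * 2^m)) div 2^m = i div 2^m mod 2^l" "(i mod (2^l * 2^m)) mod 2^m = i mod 2^m"
proof -
  have e: "i mod (2^l * 2^m) = 2^m * (i div 2^m mod 2^l) + i mod 2^m"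
    by (metis mod_mult2_eq mult.commute)
  show "(i mod (2^l * 2^m)) div 2^m = i div 2^m mod 2^l" unfolding e by simp
  show "(i mod (2^l * 2^m)) mod 2^m = i mod 2^m" unfolding e by simp
qed

lemma out_svec: "out_state N l m \<alpha> (Phi l m A \<gamma>) = svec N l m (\<lambda>y x b. \<alpha> y * Tf0 l m A \<gamma> y x b)"
proof (rule svec_eqI)
  show "dim_vec (out_state N l m \<alpha> (Phi l m A \<gamma>)) = dimH N l m" by (simp add: out_state_def)
  fix i assume i: "i < dimH N l m"
  have lt: "i mod (2^l * 2^m) < 2^l * 2^m" by simp
  show "out_state N l m \<alpha> (Phi l m A \<gamma>) $ i = \<alpha> (yreg l m i) * Tf0 l m A \<gamma> (yreg l m i) (xreg l m i) (breg m i)"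
    using i lt unfolding out_state_def Phi_def xreg_def breg_def
    by (simp add: mod_split_idx)
qed

lemma sin_phase:
  assumes "0 \<le> s2" "s2 \<le> 1"
  shows "(sin (pi * phase s2))\<^sup>2 = s2"
proof -
  have z: "0 \<le> sqrt s2" using assms by simp
  have le1: "sqrt s2 \<le> 1" "-1 \<le> sqrt s2" using assms z by (simp, linarith)
  have "pi * phase s2 = arcsin (sqrt s2)" unfolding phase_def by simp
  then show ?thesis using le1 assms by (simp add: sin_arcsin)
qed

lemma final_part:
  fixes eps :: real
  assumes eps: "0 < eps" and Me: "1 / eps \<le> 2^m"
    and U: "\<forall>y<N. unitary_mat (2^l) (A y)" and G: "\<forall>y<N. \<gamma> y < 2^l"
  shows "\<exists>\<Phi>. (\<forall>y<N. dim_vec (\<Phi> y) = 2^l * 2^m \<and>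
           prob_last l m (\<Phi> y) (\<lambda>b. True) = 1 \<and>
           prob_last l m (\<Phi> y)
             (\<lambda>b. \<bar>(sin (real b * pi / 2^m))\<^sup>2 - (cmod (A y $$ (\<gamma> y, 0)))\<^sup>2\<bar> \<le> 80 * eps)
             \<ge> 8 / pi\<^sup>2) \<and>
        (\<forall>\<alpha>. run_circuit N l m A \<gamma> (circ N l m) (init_state N l m \<alpha>) = out_state N l m \<alpha> \<Phi>)"
proof (intro exI[of _ "Phi l m A \<gamma>"] conjI allI impI)
  fix \<alpha>
  show "run_circuit N l m A \<gamma> (circ N l m) (init_state N l m \<alpha>) = out_state N l m \<alpha> (Phi l m A \<gamma>)"
    unfolding circ_run[OF U G] out_svec ..
next
  fix y assume y: "y < N"
  have Uy: "unitary_mat (2^l) (A y)" and gy: "\<gamma> y < 2^l" using U G y by auto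
  define s2 where "s2 = (cmod (A y $$ (\<gamma> y, 0)))\<^sup>2"
  define M :: nat where "M = 2^m"
  have M: "0 < M" unfolding M_def by simp
  have rM: "real M = 2^m" unfolding M_def by simp
  have s2b: "0 \<le> s2" "s2 \<le> 1"
  proof -
    show "0 \<le> s2" unfolding s2_def by simp
    have "(cmod (A y $$ (\<gamma> y, 0)))\<^sup>2 \<le> (\<Sum>x<2^l. (cmod (A y $$ (x,0)))\<^sup>2)"
      using gy by (intro member_le_sum) auto
    then show "s2 \<le> 1" using psi_norm[OF Uy] unfolding s2_def by simp
  qed
  define E1 where "E1 b = Esum M (phase s2 - real b / real M)" for b
  define E2 where "E2 b = Esum M (- phase s2 - real b / real M)" for b
  have pf: "prob_last l m (Phi l m A \<gamma> y) P = (\<Sum>b<M. if P b then (E1 b + E2 b) / 2 else 0)" for P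
    unfolding prob_form[where A=A and y=y and \<gamma>=\<gamma> and l=l, OF Uy gy] E1_def E2_def M_def s2_def ..
  show "dim_vec (Phi l m A \<gamma> y) = 2^l * 2^m" unfolding Phi_def by simp
  show "prob_last l m (Phi l m A \<gamma> y) (\<lambda>b. True) = 1"
  proof -
    have "(\<Sum>b<M. (E1 b + E2 b) / 2) = ((\<Sum>b<M. E1 b) + (\<Sum>b<M. E2 b)) / 2"
      by (simp only: sum_divide_distrib[symmetric] sum.distrib)
    also have "\<dots> = 1" unfolding E1_def E2_def parseval[OF M] by simp
    finally show ?thesis unfolding pf by simp
  qed
  define P where "P b = (\<bar>(sin (real b * pi / 2^m))\<^sup>2 - (cmod (A y $$ (\<gamma> y, 0)))\<^sup>2\<bar> \<le> 80 * eps)" for b :: nat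
  have goodx: "P (nat (k mod int M))" if "(sin (pi * x / 2^m))\<^sup>2 = s2" "\<bar>x - real_of_int k\<bar> \<le> 20" for x k
    unfolding P_def s2_def[symmetric] M_def using good_lemma[OF eps Me that] by simp
  have c1: "17/19 \<le> (\<Sum>b<M. if P b then E1 b else 0)"
  proof -
    have sx: "(sin (pi * (real M * phase s2) / 2^m))\<^sup>2 = s2"
      using sin_phase[OF s2b] unfolding rM by simp
    have "17/19 \<le> (\<Sum>b<M. if P b then Esum M ((real M * phase s2) / real M - real b / real M) else 0)"
      by (rule core[OF M]) (rule goodx[OF sx])
    moreover have eqx: "real M * phase s2 / real M = phase s2" using M by simp
    ultimately show ?thesis unfolding E1_def by (simp only: eqx)
  qed
  have c2: "17/19 \<le> (\<Sum>b<M. if P b then E2 b else 0)"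
  proof -
    have sx: "(sin (pi * (- (real M * phase s2)) / 2^m))\<^sup>2 = s2"
      using sin_phase[OF s2b] unfolding rM by simp
    have "17/19 \<le> (\<Sum>b<M. if P b then Esum M ((- (real M * phase s2)) / real M - real b / real M) else 0)"
      by (rule core[OF M]) (rule goodx[OF sx])
    moreover have eqx: "(- (real M * phase s2)) / real M = - phase s2" using M by simp
    ultimately show ?thesis unfolding E2_def by (simp only: eqx)
  qed
  have "(\<Sum>b<M. if P b then (E1 b + E2 b) / 2 else 0) =
      (\<Sum>b<M. ((if P b then E1 b else 0) + (if P b then E2 b else 0)) / 2)"
    by (intro sum.cong refl) auto
  also have "\<dots> = ((\<Sum>b<M. if P b then E1 b else 0) + (\<Sum>b<M. if P b then E2 b else 0)) / 2"
    by (simp only: sum_divide_distrib[symmetric] sum.distrib)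
  also have "\<dots> \<ge> 17/19" using c1 c2 by simp
  finally have p: "17/19 \<le> prob_last l m (Phi l m A \<gamma> y) P" unfolding pf .
  have "8 / pi\<^sup>2 \<le> 8 / 9"
  proof -
    have "(3::real) * 3 \<le> pi * pi" using pi_gt3 by (intro mult_mono) auto
    then have "9 \<le> pi\<^sup>2" by (simp add: power2_eq_square)
    then show ?thesis by (intro divide_left_mono) auto
  qed
  also have "\<dots> \<le> 17/19" by simp
  finally show "prob_last l m (Phi l m A \<gamma> y)
             (\<lambda>b. \<bar>(sin (real b * pi / 2^m))\<^sup>2 - (cmod (A y $$ (\<gamma> y, 0)))\<^sup>2\<bar> \<le> 80 * eps)
             \<ge> 8 / pi\<^sup>2" using p unfolding P_def by simp
qed



theorem theorem2:
  "\<exists>C1 > 0. \<exists>C2 > 0. \<forall>(\<epsilon>::real) (N::nat) (l::nat) (k::nat).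
     0 < \<epsilon> \<and> \<epsilon> \<le> 1 \<and> 1 \<le> N \<longrightarrow>
     (let m = nat \<lceil>log 2 (1 / \<epsilon>)\<rceil> in
      \<exists>gs. valid_circuit N l m gs \<and> real (num_queries k gs) \<le> C1 * real k / \<epsilon> \<and>
        (\<forall>(Orc::complex mat) (U::nat \<Rightarrow> nat \<Rightarrow> complex mat) (\<gamma>::nat \<Rightarrow> nat).
           unitary_mat (2^l) Orc \<and> (\<forall>y<N. \<forall>i\<le>k. unitary_mat (2^l) (U y i)) \<and>
           (\<forall>y<N. \<gamma> y < 2^l) \<longrightarrow>
           (let A = (\<lambda>y. oracle_alg Orc (U y) k) in
            \<exists>\<Phi>::nat \<Rightarrow> complex vec.
              (\<forall>y<N. dim_vec (\<Phi> y) = 2^l * 2^m \<and>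
                 prob_last l m (\<Phi> y) (\<lambda>b. True) = 1 \<and>
                 prob_last l m (\<Phi> y)
                   (\<lambda>b. \<bar>(sin (real b * pi / 2^m))\<^sup>2 - (cmod (A y $$ (\<gamma> y, 0)))\<^sup>2\<bar> \<le> C2 * \<epsilon>)
                   \<ge> 8 / pi\<^sup>2) \<and>
              (\<forall>\<alpha>::nat \<Rightarrow> complex.
                 run_circuit N l m A \<gamma> gs (init_state N l m \<alpha>) = out_state N l m \<alpha> \<Phi>))))"
  apply (rule exI[of _ "4::real"], rule conjI, simp)
  apply (rule exI[of _ "80::real"], rule conjI, simp)
  apply (intro allI impI)
  apply (unfold Let_def)
  subgoal premises prems for \<epsilon> N l k
  proof -
    have e: "0 < \<epsilon>" "\<epsilon> \<le> 1" using prems by auto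
    show ?thesis
      apply (rule exI[of _ "circ N l (nat \<lceil>log 2 (1 / \<epsilon>)\<rceil>)"])
      apply (intro conjI allI impI)
        apply (rule circ_valid)
       apply (rule query_bound[OF e])
      subgoal premises H for Orc U \<gamma>
      proof -
        have U: "\<forall>y<N. unitary_mat (2^l) (oracle_alg Orc (U y) k)"
          using H by (auto intro!: oracle_alg_unitary)
        have G: "\<forall>y<N. \<gamma> y < 2^l" using H by auto
        show ?thesis
          by (rule final_part[where A = "\<lambda>y. oracle_alg Orc (U y) k", OF e(1) m_bounds(1)[OF e] U G])
      qed
      done
  qed
  done


end
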